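(* Let $r\ge0$, $n\ge1$, $c$, $i$ and $p$ be integers with $1\le i<n-r$ and $0\le p\le n$. Then $\operatorname{SP}_{k_i}\big(F_q(r,n,c,p;k_1,\ldots,k_{n-r})\big)/q^{rk_i}$ does not depend on $k_i$.
   Context: For integers $0\le r\le n$ and $c$, an $(r,n,c)$-pattern is an array of integers $(a_{i,j})_{1\le i\le r+1,\ i-1\le j\le n+1}$ with $a_{i,i-1}=0$, $a_{i,n+1}=c$, and for all $2\le i\le r+1$, $i-1\le j\le n$: if $a_{i,j}\le a_{i,j+1}$ then $a_{i,j}\le a_{i-1,j}\le a_{i,j+1}$, and if $a_{i,j}>a_{i,j+1}$ then $a_{i,j}>a_{i-1,j}>a_{i,j+1}$. Its norm is $\sum_{i=1}^{r+1}\sum_{j=i}^{n}a_{i,j}$. An inversion is a pair $(a_{i,j},a_{i,j+1})$ with $a_{i,j}>a_{i,j+1}$ and $i\ne1$; $\operatorname{sgn}(a)=(-1)^{\#\text{inversions}}$. $F_q(r,n,c,p;k_1,\ldots,k_{n-r})=q^{-(k_1+\cdots+k_{n-r})}\sum_a\operatorname{sgn}(a)q^{\operatorname{norm}(a)}$, summed over all $(r,n,c)$-patterns with $a_{r+1,r+i}=k_i$ for $1\le i\le n-r$ and exactly $p$ of $a_{1,1},\ldots,a_{1,n}$ odd ($q$ an indeterminate). A $q$-polynomial in an integer variable $X$ is a polynomial in $q^X$ with coefficients independent of $X$; a $q$-quasi-polynomial of period $1$ or $2$ in $X$ is a function $p(X)=(-1)^Xp_1(X)+p_2(X)$ with $q$-polynomials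 $p_1,p_2$ (uniquely determined), and $\operatorname{SP}_X(p(X)):=p_1(X)$ is its signed part. Note that $F_q(r,n,c,p;\ldots)$ is a $q$-quasi-polynomial of period at most $2$ in each $k_i$ (coefficients depending on the other variables), so its signed part in $k_i$ is defined. *)

theory Defs
  imports Main "HOL-Computational_Algebra.Formal_Laurent_Series" "HOL-Computational_Algebra.Polynomial"
begin

text \<open>The indeterminate q, realised as the variable of formal Laurent series over the rationals
  (a field containing all Laurent polynomials in q).\<close>
abbreviation qvar :: "rat fls" where "qvar \<equiv> fls_X"

text \<open>An (r,n,c)-pattern: an integer array a i j on the index set 1 <= i <= r+1, i-1 <= j <= n+1,
  represented as a function int => int => int that is 0 outside this index set.\<close>
definition pattern_dom :: "int \<Rightarrow> int \<Rightarrow> (int \<times> int) set" where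
  "pattern_dom r n = {(i, j). 1 \<le> i \<and> i \<le> r + 1 \<and> i - 1 \<le> j \<and> j \<le> n + 1}"

definition is_pattern :: "int \<Rightarrow> int \<Rightarrow> int \<Rightarrow> (int \<Rightarrow> int \<Rightarrow> int) \<Rightarrow> bool" where
  "is_pattern r n c a \<longleftrightarrow>
     (\<forall>i j. (i, j) \<notin> pattern_dom r n \<longrightarrow> a i j = 0) \<and>
     (\<forall>i\<in>{1..r+1}. a i (i - 1) = 0 \<and> a i (n + 1) = c) \<and>
     (\<forall>i\<in>{2..r+1}. \<forall>j\<in>{i-1..n}.
        (a i j \<le> a i (j + 1) \<longrightarrow> a i j \<le> a (i - 1) j \<and> a (i - 1) j \<le> a i (j + 1)) \<and>
        (a i j > a i (j + 1) \<longrightarrow> a i j > a (i - 1) j \<and> a (i - 1) j > a i (j + 1)))"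

definition pattern_norm :: "int \<Rightarrow> int \<Rightarrow> (int \<Rightarrow> int \<Rightarrow> int) \<Rightarrow> int" where
  "pattern_norm r n a = (\<Sum>i\<in>{1..r+1}. \<Sum>j\<in>{i..n}. a i j)"

definition inversions :: "int \<Rightarrow> int \<Rightarrow> (int \<Rightarrow> int \<Rightarrow> int) \<Rightarrow> (int \<times> int) set" where
  "inversions r n a = {(i, j). 2 \<le> i \<and> i \<le> r + 1 \<and> i - 1 \<le> j \<and> j \<le> n \<and> a i j > a i (j + 1)}"

definition pattern_sgn :: "int \<Rightarrow> int \<Rightarrow> (int \<Rightarrow> int \<Rightarrow> int) \<Rightarrow> int" where
  "pattern_sgn r n a = (-1) ^ card (inversions r n a)"

definition patterns_F :: "int \<Rightarrow> int \<Rightarrow> int \<Rightarrow> int \<Rightarrow> (int \<Rightarrow> int) \<Rightarrow> (int \<Rightarrow> int \<Rightarrow> int) set" where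
  "patterns_F r n c p k = {a. is_pattern r n c a \<and>
      (\<forall>t\<in>{1..n-r}. a (r + 1) (r + t) = k t) \<and>
      int (card {j\<in>{1..n}. odd (a 1 j)}) = p}"

definition F_q :: "int \<Rightarrow> int \<Rightarrow> int \<Rightarrow> int \<Rightarrow> (int \<Rightarrow> int) \<Rightarrow> rat fls" where
  "F_q r n c p k = qvar powi (- (\<Sum>t\<in>{1..n-r}. k t)) *
     (\<Sum>a\<in>patterns_F r n c p k. of_int (pattern_sgn r n a) * qvar powi (pattern_norm r n a))"

definition q_poly :: "(int \<Rightarrow> rat fls) \<Rightarrow> bool" where
  "q_poly f \<longleftrightarrow> (\<exists>P :: rat fls poly. \<forall>X. f X = poly P (qvar powi X))"

definition SP :: "(int \<Rightarrow> rat fls) \<Rightarrow> int \<Rightarrow> rat fls" where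
  "SP f = (THE p1. \<exists>p2. q_poly p1 \<and> q_poly p2 \<and> (\<forall>X. f X = (-1) powi X * p1 X + p2 X))"

end

theory Submission
  imports Defs "HOL-Library.FuncSet"
begin

type_synonym key = "int \<Rightarrow> rat fls"

definition UB :: "rat fls set" where "UB = range (\<lambda>e::nat. qvar ^ e)"
definition lam :: "nat \<Rightarrow> rat fls" where "lam r = - (qvar ^ r)"

lemma qpow_inj: "(qvar ^ a = qvar ^ b) \<longleftrightarrow> a = b"
proof
  assume "qvar ^ a = qvar ^ b"
  hence "fls_nth (qvar ^ a) (int a) = fls_nth (qvar ^ b) (int a)" by simp
  thus "a = b" by (simp split: if_splits)
qed simp

lemma neg_qpow_ne: "- (qvar ^ a) \<noteq> qvar ^ b"
proof
  assume "- (qvar ^ a) = qvar ^ b"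
  hence "fls_nth (- (qvar ^ a)) (int a) = fls_nth (qvar ^ b) (int a)" by simp
  thus False by (simp split: if_splits)
qed

lemma lam_inj: "lam a = lam b \<longleftrightarrow> a = b"
  unfolding lam_def using qpow_inj by (metis neg_equal_iff_equal)

lemma lam_notin_UB: "lam r \<notin> UB"
  unfolding lam_def UB_def using neg_qpow_ne by blast

lemma UB_nz: "b \<in> UB \<Longrightarrow> b \<noteq> 0"
  unfolding UB_def by auto

lemma lam_nz: "lam r \<noteq> 0"
  unfolding lam_def by simp

lemma one_UB: "1 \<in> UB"
  unfolding UB_def by (metis power_0 rangeI)

lemma UB_mult: "a \<in> UB \<Longrightarrow> b \<in> UB \<Longrightarrow> a * b \<in> UB"
  unfolding UB_def by (auto simp: power_add[symmetric])

lemma q_lam: "qvar * lam r = lam (Suc r)"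
  unfolding lam_def by simp

lemma lam_mult_lam: "lam a * lam b \<in> UB"
  unfolding lam_def UB_def by (auto simp: power_add[symmetric])

lemma qUB_ne1: "b \<in> UB \<Longrightarrow> qvar * b \<noteq> 1"
  unfolding UB_def using qpow_inj[of "Suc _" 0] by auto

lemma lam_ne1: "lam r \<noteq> 1"
  using neg_qpow_ne[of r 0] unfolding lam_def by simp

lemma qUB_UB: "b \<in> UB \<Longrightarrow> qvar * b \<in> UB"
  unfolding UB_def by (auto simp: power_Suc[symmetric] simp del: power_Suc)

lemma mixed_prod: "b \<in> UB \<Longrightarrow> (qvar * b) * lam s \<notin> UB \<and> (qvar * b) * lam s \<noteq> lam s"
proof -
  assume "b \<in> UB"
  then obtain e where b: "b = qvar ^ e" unfolding UB_def by auto
  have eq: "(qvar * b) * lam s = lam (Suc e + s)"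
    unfolding lam_def b by (simp add: power_add)
  show ?thesis unfolding eq using lam_notin_UB lam_inj by auto
qed

definition Base :: "nat \<Rightarrow> rat fls \<Rightarrow> bool" where "Base r b \<longleftrightarrow> b \<in> UB \<or> b = lam r"

lemma Base_nz: "Base r b \<Longrightarrow> b \<noteq> 0"
  unfolding Base_def using UB_nz lam_nz by auto

lemma qBase_ne1: "Base r b \<Longrightarrow> qvar * b \<noteq> 1"
  unfolding Base_def using qUB_ne1 lam_ne1 q_lam by metis

lemma qBase_lam: "Base r b \<Longrightarrow> qvar * b = lam (Suc r) \<longleftrightarrow> b = lam r"
  unfolding Base_def using q_lam qUB_UB lam_notin_UB by metis

lemma qBase_UB: "Base r b \<Longrightarrow> qvar * b \<in> UB \<longleftrightarrow> b \<in> UB"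
  unfolding Base_def using q_lam qUB_UB lam_notin_UB by metis

lemma qBase_Base: "Base r b \<Longrightarrow> Base (Suc r) (qvar * b)"
  unfolding Base_def using q_lam qUB_UB by metis

lemma prod_ne_lam: assumes "Base r x" "Base r y" shows "(qvar * x) * (qvar * y) \<noteq> lam (Suc r)"
proof -
  consider "x \<in> UB" "y \<in> UB" | "x = lam r" "y = lam r" | "x \<in> UB" "y = lam r" | "x = lam r" "y \<in> UB"
    using assms unfolding Base_def by blast
  thus ?thesis
  proof cases
    case 1 thus ?thesis using UB_mult qUB_UB lam_notin_UB by metis
  next
    case 2 thus ?thesis using lam_mult_lam lam_notin_UB q_lam by metis
  next
    case 3 thus ?thesis using mixed_prod[of x "Suc r"] q_lam by metis
  next
    case 4 thus ?thesis using mixed_prod[of y "Suc r"] q_lam by (metis mult.commute)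
  qed
qed

lemma prod_UB: assumes "Base r x" "Base r y" "(qvar * x) * (qvar * y) \<in> UB"
  shows "(x \<in> UB \<and> y \<in> UB) \<or> (x = lam r \<and> y = lam r)"
proof -
  consider "x \<in> UB" "y \<in> UB" | "x = lam r" "y = lam r" | "x \<in> UB" "y = lam r" | "x = lam r" "y \<in> UB"
    using assms unfolding Base_def by blast
  thus ?thesis
  proof cases
    case 3 thus ?thesis using mixed_prod[of x "Suc r"] q_lam assms(3) by metis
  next
    case 4 thus ?thesis using mixed_prod[of y "Suc r"] q_lam assms(3) by (metis mult.commute)
  qed auto
qed

lemma prod_mixed: assumes "Base r x" "Base r y" "(qvar * x) * (qvar * y) \<notin> UB"
  shows "(x \<in> UB \<and> y = lam r) \<or> (x = lam r \<and> y \<in> UB)"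
proof -
  consider "x \<in> UB" "y \<in> UB" | "x = lam r" "y = lam r" | "x \<in> UB" "y = lam r" | "x = lam r" "y \<in> UB"
    using assms unfolding Base_def by blast
  thus ?thesis
  proof cases
    case 1 thus ?thesis using UB_mult qUB_UB assms(3) by metis
  next
    case 2 thus ?thesis using lam_mult_lam q_lam assms(3) by metis
  qed auto
qed

type_synonym coef = "key \<Rightarrow> rat fls"

definition supp :: "coef \<Rightarrow> key set" where "supp w = {\<kappa>. w \<kappa> \<noteq> 0}"
definition mon :: "int \<Rightarrow> key \<Rightarrow> (int \<Rightarrow> int) \<Rightarrow> rat fls" where
  "mon M \<kappa> k = (\<Prod>t\<in>{1..M}. \<kappa> t powi k t)"
definition ev :: "int \<Rightarrow> coef \<Rightarrow> (int \<Rightarrow> int) \<Rightarrow> rat fls" where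
  "ev M w k = (\<Sum>\<kappa>\<in>supp w. w \<kappa> * mon M \<kappa> k)"
definition mu :: "key \<Rightarrow> int \<Rightarrow> rat fls" where "mu \<kappa> t = qvar * \<kappa> t"
definition img :: "int \<Rightarrow> key \<Rightarrow> int set \<Rightarrow> key" where
  "img M \<kappa> C = (\<lambda>t. if 1 \<le> t \<and> t \<le> M then (if t \<in> C then mu \<kappa> t else 1) * (if t + 1 \<notin> C then mu \<kappa> (t + 1) else 1) else 1)"
definition fct :: "key \<Rightarrow> int set \<Rightarrow> int \<Rightarrow> rat fls" where
  "fct \<kappa> C t = (if t \<in> C then mu \<kappa> t else -1) / (mu \<kappa> t - 1)"
definition wt :: "int \<Rightarrow> int \<Rightarrow> key \<Rightarrow> int set \<Rightarrow> rat fls" where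
  "wt M c \<kappa> C = (\<Prod>t\<in>{1..M+1}. fct \<kappa> C t) * (if M + 1 \<in> C then mu \<kappa> (M + 1) powi c else 1)"
definition step :: "int \<Rightarrow> int \<Rightarrow> coef \<Rightarrow> coef" where
  "step M c w \<kappa>' = (\<Sum>x\<in>supp w \<times> Pow {1..M+1}. if img M (fst x) (snd x) = \<kappa>' then w (fst x) * wt M c (fst x) (snd x) else 0)"
definition swp :: "int \<Rightarrow> key \<Rightarrow> key" where "swp t \<kappa> = \<kappa>(t := \<kappa> (t + 1), t + 1 := \<kappa> t)"

definition Inv :: "nat \<Rightarrow> int \<Rightarrow> coef \<Rightarrow> bool" where
  "Inv r M w \<longleftrightarrow> finite (supp w) \<and>
    (\<forall>\<kappa>\<in>supp w. (\<forall>t. (t < 1 \<or> t > M) \<longrightarrow> \<kappa> t = 1) \<and> (\<forall>t. 1 \<le> t \<and> t \<le> M \<longrightarrow> Base r (\<kappa> t))) \<and>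
    (\<forall>\<kappa> t. 1 \<le> t \<longrightarrow> t + 1 \<le> M \<longrightarrow> \<kappa> t = lam r \<longrightarrow> \<kappa> (t + 1) \<in> UB \<longrightarrow>
        w \<kappa> * \<kappa> t = - (w (swp t \<kappa>) * \<kappa> (t + 1)))"

lemma swp_swp[simp]: "swp t (swp t \<kappa>) = \<kappa>"
  unfolding swp_def by auto

lemma swp_at: "swp t \<kappa> t = \<kappa> (t+1)" "swp t \<kappa> (t+1) = \<kappa> t" "s \<noteq> t \<Longrightarrow> s \<noteq> t + 1 \<Longrightarrow> swp t \<kappa> s = \<kappa> s"
  unfolding swp_def by auto

lemma InvD:
  assumes "Inv r M w"
  shows "finite (supp w)"
    and "w \<kappa> \<noteq> 0 \<Longrightarrow> (t < 1 \<or> t > M) \<Longrightarrow> \<kappa> t = 1"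
    and "w \<kappa> \<noteq> 0 \<Longrightarrow> 1 \<le> t \<Longrightarrow> t \<le> M \<Longrightarrow> Base r (\<kappa> t)"
    and "1 \<le> t \<Longrightarrow> t + 1 \<le> M \<Longrightarrow> \<kappa> t = lam r \<Longrightarrow> \<kappa> (t + 1) \<in> UB \<Longrightarrow>
        w \<kappa> * \<kappa> t = - (w (swp t \<kappa>) * \<kappa> (t + 1))"
  using assms unfolding Inv_def supp_def by auto

lemma InvP2:
  assumes "Inv r M w" "1 \<le> t" "t + 1 \<le> M" "\<kappa> t \<in> UB" "\<kappa> (t + 1) = lam r"
  shows "w \<kappa> * \<kappa> t = - (w (swp t \<kappa>) * \<kappa> (t + 1))"
proof -
  have "w (swp t \<kappa>) * swp t \<kappa> t = - (w (swp t (swp t \<kappa>)) * swp t \<kappa> (t + 1))"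
    using InvD(4)[OF assms(1), of t "swp t \<kappa>"] assms by (simp add: swp_at)
  thus ?thesis by (simp add: swp_at)
qed

definition mixed :: "nat \<Rightarrow> rat fls \<Rightarrow> rat fls \<Rightarrow> bool" where
  "mixed r a b \<longleftrightarrow> (a = lam r \<and> b \<in> UB) \<or> (a \<in> UB \<and> b = lam r)"

lemma P_mixed:
  assumes "Inv r N w" "1 \<le> t" "t + 1 \<le> N" "mixed r (\<kappa> t) (\<kappa> (t+1))"
  shows "w \<kappa> * \<kappa> t = - (w (swp t \<kappa>) * \<kappa> (t + 1))"
  using assms InvD(4)[OF assms(1)] InvP2[OF assms(1)] unfolding mixed_def by blast

lemma img_in: "1 \<le> t \<Longrightarrow> t \<le> M \<Longrightarrow>
  img M \<kappa> C t = (if t \<in> C then mu \<kappa> t else 1) * (if t + 1 \<notin> C then mu \<kappa> (t + 1) else 1)"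
  unfolding img_def by simp

lemma img_out: "t < 1 \<or> t > M \<Longrightarrow> img M \<kappa> C t = 1"
  unfolding img_def by auto

lemma img_cases:
  assumes "Base r (\<kappa> t)" "Base r (\<kappa> (t+1))" "1 \<le> t" "t \<le> M"
  shows "img M \<kappa> C t \<in> UB \<or> img M \<kappa> C t = lam (Suc r) \<or>
         (t \<in> C \<and> t + 1 \<notin> C \<and> mixed r (\<kappa> t) (\<kappa> (t+1)))"
proof -
  have a: "mu \<kappa> t \<in> UB \<or> mu \<kappa> t = lam (Suc r)" and b: "mu \<kappa> (t+1) \<in> UB \<or> mu \<kappa> (t+1) = lam (Suc r)"
    using qBase_Base[OF assms(1)] qBase_Base[OF assms(2)] unfolding mu_def Base_def by auto
  show ?thesis
  proof (cases "t \<in> C")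
    case True
    show ?thesis
    proof (cases "t + 1 \<in> C")
      case False
      show ?thesis
      proof (cases "img M \<kappa> C t \<in> UB")
        case False
        hence "(qvar * \<kappa> t) * (qvar * \<kappa> (t+1)) \<notin> UB" using \<open>t \<in> C\<close> \<open>t+1 \<notin> C\<close> assms
          by (simp add: img_in mu_def)
        hence "mixed r (\<kappa> t) (\<kappa> (t+1))" using prod_mixed[OF assms(1,2)] unfolding mixed_def by blast
        thus ?thesis using \<open>t \<in> C\<close> \<open>t+1 \<notin> C\<close> by blast
      qed simp
    qed (use a assms one_UB in \<open>auto simp: img_in\<close>)
  next
    case False
    thus ?thesis using b assms one_UB by (auto simp: img_in)
  qed
qed

lemma prod_split2:
  fixes f :: "int \<Rightarrow> 'a::comm_monoid_mult"
  assumes "finite I" "t \<in> I" "t + 1 \<in> I"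
  shows "prod f I = f t * f (t+1) * prod f (I - {t, t+1})"
proof -
  have "prod f I = f t * prod f (I - {t})" using prod.remove[OF assms(1,2)] .
  also have "prod f (I - {t}) = f (t+1) * prod f (I - {t} - {t+1})"
    using prod.remove[of "I - {t}" "t+1" f] assms by auto
  also have "I - {t} - {t+1} = I - {t, t+1}" by auto
  finally show ?thesis by (simp add: mult.assoc)
qed

lemma fct_swp_other: "s \<noteq> t \<Longrightarrow> s \<noteq> t + 1 \<Longrightarrow> fct (swp t \<kappa>) C s = fct \<kappa> C s"
  unfolding fct_def mu_def by (simp add: swp_at)

lemma prod_fct_swp_rest:
  "(\<Prod>s\<in>I - {t, t+1}. fct (swp t \<kappa>) C s) = (\<Prod>s\<in>I - {t, t+1}. fct \<kappa> C s)"
  by (rule prod.cong) (auto simp: fct_swp_other)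

lemma wt_swp_gen:
  assumes "1 \<le> t" "t + 1 \<le> M + 1"
    and cf: "M + 1 \<in> C \<Longrightarrow> M + 1 \<noteq> t \<and> M + 1 \<noteq> t + 1"
  shows "wt M c (swp t \<kappa>) C * (fct \<kappa> C t * fct \<kappa> C (t+1)) =
         wt M c \<kappa> C * (fct (swp t \<kappa>) C t * fct (swp t \<kappa>) C (t+1))"
proof -
  let ?I = "{1..M+1}"
  have I: "finite ?I" "t \<in> ?I" "t + 1 \<in> ?I" using assms by auto
  have cfe: "(if M + 1 \<in> C then mu (swp t \<kappa>) (M + 1) powi c else 1) = (if M + 1 \<in> C then mu \<kappa> (M + 1) powi c else 1)"
    using cf by (auto simp: mu_def swp_at)
  show ?thesis
    unfolding wt_def prod_split2[OF I, of "fct (swp t \<kappa>) C"] prod_split2[OF I, of "fct \<kappa> C"]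
      prod_fct_swp_rest cfe by (simp add: algebra_simps)
qed

lemma wt_swp_RL:
  assumes "1 \<le> t" "t + 1 \<le> M + 1" "t \<in> C" "t + 1 \<notin> C" "Base r (\<kappa> t)" "Base r (\<kappa> (t+1))"
  shows "wt M c (swp t \<kappa>) C * \<kappa> t = wt M c \<kappa> C * \<kappa> (t+1)"
proof -
  have n1: "qvar * \<kappa> t - 1 \<noteq> 0" "qvar * \<kappa> (t+1) - 1 \<noteq> 0"
    using qBase_ne1[OF assms(5)] qBase_ne1[OF assms(6)] by auto
  have nz: "\<kappa> t \<noteq> 0" "\<kappa> (t+1) \<noteq> 0" using Base_nz assms(5,6) by auto
  have e: "wt M c (swp t \<kappa>) C * (fct \<kappa> C t * fct \<kappa> C (t+1)) =
         wt M c \<kappa> C * (fct (swp t \<kappa>) C t * fct (swp t \<kappa>) C (t+1))"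
    by (rule wt_swp_gen) (use assms in auto)
  have f1: "fct \<kappa> C t * fct \<kappa> C (t+1) = - (qvar * \<kappa> t) / ((qvar * \<kappa> t - 1) * (qvar * \<kappa> (t+1) - 1))"
    using assms n1 by (simp add: fct_def mu_def)
  have f2: "fct (swp t \<kappa>) C t * fct (swp t \<kappa>) C (t+1) = - (qvar * \<kappa> (t+1)) / ((qvar * \<kappa> t - 1) * (qvar * \<kappa> (t+1) - 1))"
    using assms n1 by (simp add: fct_def mu_def swp_at)
  have qz: "(qvar::rat fls) \<noteq> 0" by simp
  have d: "(qvar * \<kappa> t - 1) * (qvar * \<kappa> (t+1) - 1) \<noteq> 0" using n1 by simp
  from e[unfolded f1 f2] have "wt M c (swp t \<kappa>) C * (qvar * \<kappa> t) = wt M c \<kappa> C * (qvar * \<kappa> (t+1))"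
    using d by (simp add: divide_simps)
  thus ?thesis using qz by (simp add: mult.left_commute)
qed

lemma img_swp_RL:
  assumes "t \<in> C" "t + 1 \<notin> C"
  shows "img M (swp t \<kappa>) C = img M \<kappa> C"
proof
  fix s
  have m1: "mu (swp t \<kappa>) s' = mu \<kappa> s'" if "s' \<noteq> t" "s' \<noteq> t + 1" for s'
    using that by (simp add: mu_def swp_at)
  have m2: "mu (swp t \<kappa>) t = mu \<kappa> (t+1)" "mu (swp t \<kappa>) (t+1) = mu \<kappa> t"
    by (simp_all add: mu_def swp_at)
  consider "s = t - 1" | "s = t" | "s = t + 1" | "s \<noteq> t - 1" "s \<noteq> t" "s \<noteq> t + 1" by blast
  thus "img M (swp t \<kappa>) C s = img M \<kappa> C s"
  proof cases
    case 1 thus ?thesis using assms m1[of "t - 1"] unfolding img_def by auto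
  next
    case 2 thus ?thesis using assms m2 unfolding img_def by (auto simp: mult.commute)
  next
    case 3 thus ?thesis using assms m1[of "t + 2"] unfolding img_def by (auto simp: add.assoc)
  next
    case 4 thus ?thesis using assms m1[of s] m1[of "s+1"] unfolding img_def by auto
  qed
qed

lemma sum_invol_zero:
  fixes g :: "'a \<Rightarrow> rat fls"
  assumes "\<And>x. x \<in> A \<Longrightarrow> \<sigma> x \<in> A" "\<And>x. x \<in> A \<Longrightarrow> \<sigma> (\<sigma> x) = x"
    "\<And>x. x \<in> A \<Longrightarrow> g (\<sigma> x) = - g x"
  shows "sum g A = 0"
proof -
  have "sum g A = sum (\<lambda>x. g (\<sigma> x)) A"
    by (rule sum.reindex_bij_witness[where i=\<sigma> and j=\<sigma>]) (use assms in auto)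
  also have "\<dots> = - sum g A" using assms(3) by (simp add: sum_negf)
  finally have "2 * sum g A = 0" by simp
  thus ?thesis by simp
qed

lemma step_as_filter:
  assumes "finite (supp w)"
  shows "step M c w \<kappa>' = (\<Sum>x\<in>{x\<in>supp w \<times> Pow {1..M+1}. img M (fst x) (snd x) = \<kappa>'}. w (fst x) * wt M c (fst x) (snd x))"
  unfolding step_def using assms by (simp add: sum.inter_filter)

lemma step_zero_bad:
  assumes inv: "Inv r (M+1) w" and t: "1 \<le> t" "t \<le> M" and bad: "\<kappa>' t \<notin> UB" "\<kappa>' t \<noteq> lam (Suc r)"
  shows "step M c w \<kappa>' = 0"
proof -
  let ?A = "{x\<in>supp w \<times> Pow {1..M+1}. img M (fst x) (snd x) = \<kappa>'}"
  let ?g = "\<lambda>x. w (fst x) * wt M c (fst x) (snd x)"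
  let ?\<sigma> = "\<lambda>x. (swp t (fst x), snd x)"
  have fin: "finite (supp w)" using InvD(1)[OF inv] .
  have key: "t \<in> C \<and> t + 1 \<notin> C \<and> mixed r (\<kappa> t) (\<kappa> (t+1)) \<and> Base r (\<kappa> t) \<and> Base r (\<kappa> (t+1)) \<and> w \<kappa> \<noteq> 0"
    if "(\<kappa>, C) \<in> ?A" for \<kappa> C
  proof -
    have wk: "w \<kappa> \<noteq> 0" and im: "img M \<kappa> C = \<kappa>'" using that by (auto simp: supp_def)
    have B: "Base r (\<kappa> t)" "Base r (\<kappa> (t+1))" using InvD(3)[OF inv wk] t by auto
    from img_cases[OF B t, of C] im bad show ?thesis using B wk by auto
  qed
  have "sum ?g ?A = 0"
  proof (rule sum_invol_zero[where \<sigma> = ?\<sigma>])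
    fix x assume x: "x \<in> ?A"
    obtain \<kappa> C where xe: "x = (\<kappa>, C)" by (cases x)
    note k = key[OF x[unfolded xe]]
    have P: "w \<kappa> * \<kappa> t = - (w (swp t \<kappa>) * \<kappa> (t + 1))"
      by (rule P_mixed[OF inv]) (use k t in auto)
    have nz: "\<kappa> t \<noteq> 0" "\<kappa> (t+1) \<noteq> 0" using k Base_nz by auto
    have ws: "w (swp t \<kappa>) \<noteq> 0" using P k nz by auto
    have W: "wt M c (swp t \<kappa>) C * \<kappa> t = wt M c \<kappa> C * \<kappa> (t+1)"
      by (rule wt_swp_RL) (use k t in auto)
    show "?\<sigma> x \<in> ?A" using x ws img_swp_RL[of t C M \<kappa>] k by (auto simp: xe supp_def)
    show "?\<sigma> (?\<sigma> x) = x" by (simp add: xe)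
    have "?g (?\<sigma> x) * \<kappa> t = w (swp t \<kappa>) * (wt M c (swp t \<kappa>) C * \<kappa> t)" by (simp add: xe mult.assoc)
    also have "\<dots> = w (swp t \<kappa>) * \<kappa> (t+1) * wt M c \<kappa> C" using W by (simp add: mult_ac)
    also have "\<dots> = - (w \<kappa> * \<kappa> t) * wt M c \<kappa> C" using P by simp
    also have "\<dots> = - ?g x * \<kappa> t" by (simp add: xe mult_ac)
    finally have "?g (?\<sigma> x) * \<kappa> t = - ?g x * \<kappa> t" .
    thus "?g (?\<sigma> x) = - ?g x" using nz(1) mult_right_cancel by blast
  qed
  thus ?thesis using step_as_filter[OF fin] by simp
qed

lemma step_ex:
  assumes "step M c w \<kappa>' \<noteq> 0"
  shows "\<exists>x. x \<in> supp w \<times> Pow {1..M+1} \<and> img M (fst x) (snd x) = \<kappa>'"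
proof (rule ccontr)
  assume "\<not> ?thesis"
  hence "step M c w \<kappa>' = 0" unfolding step_def by (intro sum.neutral) auto
  thus False using assms by simp
qed

lemma step_fin: "finite (supp w) \<Longrightarrow> finite (supp (step M c w))"
proof -
  assume f: "finite (supp w)"
  have "supp (step M c w) \<subseteq> (\<lambda>x. img M (fst x) (snd x)) ` (supp w \<times> Pow {1..M+1})"
  proof
    fix \<kappa>' assume "\<kappa>' \<in> supp (step M c w)"
    hence "step M c w \<kappa>' \<noteq> 0" by (simp add: supp_def)
    then obtain x where "x \<in> supp w \<times> Pow {1..M+1}" "img M (fst x) (snd x) = \<kappa>'"
      using step_ex by blast
    thus "\<kappa>' \<in> (\<lambda>x. img M (fst x) (snd x)) ` (supp w \<times> Pow {1..M+1})" by force
  qed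
  moreover have "finite (supp w \<times> Pow {1..M+1})" using f by simp
  ultimately show ?thesis by (meson finite_surj)
qed

lemma step_norm:
  assumes "step M c w \<kappa>' \<noteq> 0" "t < 1 \<or> t > M"
  shows "\<kappa>' t = 1"
proof -
  obtain x where "x \<in> supp w \<times> Pow {1..M+1}" "img M (fst x) (snd x) = \<kappa>'"
    using assms(1) step_ex by blast
  thus ?thesis using img_out[OF assms(2)] by metis
qed

lemma step_base:
  assumes inv: "Inv r (M+1) w" and "step M c w \<kappa>' \<noteq> 0" "1 \<le> t" "t \<le> M"
  shows "Base (Suc r) (\<kappa>' t)"
  using step_zero_bad[OF inv assms(3,4)] assms(2) unfolding Base_def by blast

definition rot :: "int \<Rightarrow> key \<Rightarrow> key" where
  "rot t \<kappa> = \<kappa>(t := \<kappa> (t+1), t+1 := \<kappa> (t+2), t+2 := \<kappa> t)"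
definition rotb :: "int \<Rightarrow> key \<Rightarrow> key" where
  "rotb t \<kappa> = \<kappa>(t := \<kappa> (t+2), t+1 := \<kappa> t, t+2 := \<kappa> (t+1))"

lemma rot_rotb[simp]: "rot t (rotb t \<kappa>) = \<kappa>" "rotb t (rot t \<kappa>) = \<kappa>"
  unfolding rot_def rotb_def by (auto simp: fun_eq_iff)

lemma rot_swp: "swp (t+1) (swp t \<kappa>) = rot t \<kappa>"
  unfolding rot_def swp_def by (auto simp: fun_eq_iff add.assoc)

lemma rot_rel:
  assumes inv: "Inv r (M+1) w" and t: "1 \<le> t" "t + 2 \<le> M + 1" and k: "\<kappa> t = lam r"
    and ab: "(\<kappa> (t+1) \<in> UB \<and> \<kappa> (t+2) \<in> UB) \<or> (\<kappa> (t+1) = lam r \<and> \<kappa> (t+2) = lam r)"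
  shows "w \<kappa> * (lam r * lam r) = w (rot t \<kappa>) * (\<kappa> (t+1) * \<kappa> (t+2))"
  using ab
proof
  assume "\<kappa> (t+1) = lam r \<and> \<kappa> (t+2) = lam r"
  hence "rot t \<kappa> = \<kappa>" using k unfolding rot_def by (auto simp: fun_eq_iff)
  thus ?thesis using \<open>\<kappa> (t+1) = lam r \<and> \<kappa> (t+2) = lam r\<close> by simp
next
  assume u: "\<kappa> (t+1) \<in> UB \<and> \<kappa> (t+2) \<in> UB"
  have P1: "w \<kappa> * \<kappa> t = - (w (swp t \<kappa>) * \<kappa> (t + 1))"
    by (rule InvD(4)[OF inv]) (use t k u in auto)
  have P2: "w (swp t \<kappa>) * swp t \<kappa> (t+1) = - (w (swp (t+1) (swp t \<kappa>)) * swp t \<kappa> (t + 1 + 1))"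
    by (rule InvD(4)[OF inv]) (use t k u in \<open>auto simp: swp_at add.assoc\<close>)
  have s2: "swp t \<kappa> (t + 1 + 1) = \<kappa> (t+2)" by (simp add: swp_at add.assoc)
  have a1: "swp t \<kappa> (t+1) = lam r" by (simp add: swp_at k)
  from P2 have P2': "w (swp t \<kappa>) * lam r = - (w (rot t \<kappa>) * \<kappa> (t+2))"
    unfolding a1 rot_swp s2 .
  have "w \<kappa> * (lam r * lam r) = (w \<kappa> * \<kappa> t) * lam r" using k by (simp add: mult_ac)
  also have "\<dots> = - (w (swp t \<kappa>) * lam r) * \<kappa> (t+1)" using P1 by (simp add: mult_ac)
  also have "\<dots> = w (rot t \<kappa>) * (\<kappa> (t+1) * \<kappa> (t+2))" using P2' by (simp add: mult_ac)
  finally show ?thesis .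
qed

lemma prod_split3:
  fixes f :: "int \<Rightarrow> 'a::comm_monoid_mult"
  assumes "finite I" "t \<in> I" "t + 1 \<in> I" "t + 2 \<in> I"
  shows "prod f I = f t * f (t+1) * f (t+2) * prod f (I - {t, t+1, t+2})"
proof -
  have "prod f I = f t * f (t+1) * prod f (I - {t, t+1})" by (rule prod_split2) (use assms in auto)
  also have "prod f (I - {t, t+1}) = f (t+2) * prod f (I - {t, t+1} - {t+2})"
    using prod.remove[of "I - {t, t+1}" "t+2" f] assms by auto
  also have "I - {t, t+1} - {t+2} = I - {t, t+1, t+2}" by auto
  finally show ?thesis by (simp add: mult.assoc)
qed

lemma wt_local:
  assumes t: "1 \<le> t" "t + 2 \<le> M + 1"
    and k: "\<And>s. s \<noteq> t \<Longrightarrow> s \<noteq> t+1 \<Longrightarrow> s \<noteq> t+2 \<Longrightarrow> \<kappa>2 s = \<kappa> s"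
    and C: "\<And>s. s \<noteq> t+1 \<Longrightarrow> s \<in> C2 \<longleftrightarrow> s \<in> C"
    and cf: "M + 1 \<in> C \<Longrightarrow> \<kappa>2 (M+1) = \<kappa> (M+1)"
  shows "wt M c \<kappa>2 C2 * (fct \<kappa> C t * fct \<kappa> C (t+1) * fct \<kappa> C (t+2)) =
         wt M c \<kappa> C * (fct \<kappa>2 C2 t * fct \<kappa>2 C2 (t+1) * fct \<kappa>2 C2 (t+2))"
proof -
  let ?I = "{1..M+1}"
  have I: "finite ?I" "t \<in> ?I" "t + 1 \<in> ?I" "t + 2 \<in> ?I" using t by auto
  have rest: "(\<Prod>s\<in>?I - {t, t+1, t+2}. fct \<kappa>2 C2 s) = (\<Prod>s\<in>?I - {t, t+1, t+2}. fct \<kappa> C s)"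
    by (rule prod.cong) (auto simp: fct_def mu_def k C)
  have M1: "M + 1 \<noteq> t + 1" using t by auto
  have cfe: "(if M + 1 \<in> C2 then mu \<kappa>2 (M + 1) powi c else 1) = (if M + 1 \<in> C then mu \<kappa> (M + 1) powi c else 1)"
    using cf C[OF M1] by (auto simp: mu_def)
  show ?thesis
    unfolding wt_def prod_split3[OF I, of "fct \<kappa>2 C2"] prod_split3[OF I, of "fct \<kappa> C"] rest cfe
    by (simp add: algebra_simps)
qed

lemma img_cong:
  assumes "s \<in> C2 \<longleftrightarrow> s \<in> C" "s + 1 \<in> C2 \<longleftrightarrow> s + 1 \<in> C"
    "s \<in> C \<Longrightarrow> \<kappa>2 s = \<kappa> s" "s + 1 \<notin> C \<Longrightarrow> \<kappa>2 (s+1) = \<kappa> (s+1)"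
  shows "img M \<kappa>2 C2 s = img M \<kappa> C s"
  using assms unfolding img_def mu_def by auto

lemma img_local:
  assumes k: "\<And>s. s \<noteq> t \<Longrightarrow> s \<noteq> t+1 \<Longrightarrow> s \<noteq> t+2 \<Longrightarrow> \<kappa>2 s = \<kappa> s"
    and C: "\<And>s. s \<noteq> t+1 \<Longrightarrow> s \<in> C2 \<longleftrightarrow> s \<in> C"
    and lt: "t \<notin> C \<Longrightarrow> \<kappa>2 t = \<kappa> t"
    and rt: "t + 2 \<in> C \<Longrightarrow> \<kappa>2 (t+2) = \<kappa> (t+2)"
    and s: "s \<noteq> t" "s \<noteq> t + 1"
  shows "img M \<kappa>2 C2 s = img M \<kappa> C s"
proof -
  consider "s = t - 1" | "s = t + 2" | "s \<noteq> t - 1" "s \<noteq> t + 2" by blast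
  thus ?thesis
  proof cases
    case 1
    show ?thesis
    proof (rule img_cong)
      show "s \<in> C2 \<longleftrightarrow> s \<in> C" by (rule C) (use 1 in simp)
      show "s + 1 \<in> C2 \<longleftrightarrow> s + 1 \<in> C" by (rule C) (use 1 in simp)
      show "\<kappa>2 s = \<kappa> s" by (rule k) (use 1 in simp_all)
      show "\<kappa>2 (s+1) = \<kappa> (s+1)" if "s + 1 \<notin> C" using lt that 1 by simp
    qed
  next
    case 2
    show ?thesis
    proof (rule img_cong)
      show "s \<in> C2 \<longleftrightarrow> s \<in> C" by (rule C) (use 2 in simp)
      show "s + 1 \<in> C2 \<longleftrightarrow> s + 1 \<in> C" by (rule C) (use 2 in simp)
      show "\<kappa>2 s = \<kappa> s" if "s \<in> C" using rt that 2 by simp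
      show "\<kappa>2 (s+1) = \<kappa> (s+1)" by (rule k) (use 2 in simp_all)
    qed
  next
    case 3
    show ?thesis
    proof (rule img_cong)
      show "s \<in> C2 \<longleftrightarrow> s \<in> C" by (rule C) (use 3 s in simp)
      show "s + 1 \<in> C2 \<longleftrightarrow> s + 1 \<in> C" by (rule C) (use 3 s in simp)
      show "\<kappa>2 s = \<kappa> s" by (rule k) (use 3 s in simp_all)
      show "\<kappa>2 (s+1) = \<kappa> (s+1)" by (rule k) (use 3 s in auto)
    qed
  qed
qed

lemma img_swp_eq:
  assumes k: "\<And>s. s \<noteq> t \<Longrightarrow> s \<noteq> t+1 \<Longrightarrow> s \<noteq> t+2 \<Longrightarrow> \<kappa>2 s = \<kappa> s"
    and C: "\<And>s. s \<noteq> t+1 \<Longrightarrow> s \<in> C2 \<longleftrightarrow> s \<in> C"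
    and lt: "t \<notin> C \<Longrightarrow> \<kappa>2 t = \<kappa> t"
    and rt: "t + 2 \<in> C \<Longrightarrow> \<kappa>2 (t+2) = \<kappa> (t+2)"
    and e1: "img M \<kappa>2 C2 t = img M \<kappa> C (t+1)" and e2: "img M \<kappa>2 C2 (t+1) = img M \<kappa> C t"
  shows "img M \<kappa>2 C2 = swp t (img M \<kappa> C)"
proof
  fix s
  show "img M \<kappa>2 C2 s = swp t (img M \<kappa> C) s"
    using img_local[OF k C lt rt, of s M] e1 e2 by (cases "s = t"; cases "s = t + 1") (auto simp: swp_at)
qed

lemma t12: "(t::int) + 1 + 1 = t + 2" by simp

lemma img_in1: "1 \<le> t \<Longrightarrow> t + 1 \<le> M \<Longrightarrow>
  img M \<kappa> C (t+1) = (if t + 1 \<in> C then mu \<kappa> (t+1) else 1) * (if t + 2 \<notin> C then mu \<kappa> (t + 2) else 1)"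
  using img_in[of "t+1" M \<kappa> C] unfolding t12 by simp

lemma classify1:
  assumes inv: "Inv r (M+1) w" and wk: "w \<kappa> \<noteq> 0" and t: "1 \<le> t" "t + 1 \<le> M"
    and i1: "img M \<kappa> C t = lam (Suc r)" and i2: "img M \<kappa> C (t+1) \<in> UB"
  shows "(t \<in> C \<and> t+1 \<in> C \<and> t+2 \<in> C \<and> \<kappa> t = lam r \<and> \<kappa> (t+1) \<in> UB) \<or>
        (t \<in> C \<and> t+1 \<in> C \<and> t+2 \<notin> C \<and> \<kappa> t = lam r \<and> ((\<kappa> (t+1) \<in> UB \<and> \<kappa> (t+2) \<in> UB) \<or> (\<kappa> (t+1) = lam r \<and> \<kappa> (t+2) = lam r))) \<or>
        (t \<notin> C \<and> t+1 \<notin> C \<and> t+2 \<in> C \<and> \<kappa> (t+1) = lam r) \<or>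
        (t \<notin> C \<and> t+1 \<notin> C \<and> t+2 \<notin> C \<and> \<kappa> (t+1) = lam r \<and> \<kappa> (t+2) \<in> UB)"
proof -
  have B0: "Base r (\<kappa> t)" and B1: "Base r (\<kappa> (t+1))" and B2: "Base r (\<kappa> (t+2))"
    using InvD(3)[OF inv wk] t by auto
  have I1: "img M \<kappa> C t = (if t \<in> C then qvar * \<kappa> t else 1) * (if t + 1 \<notin> C then qvar * \<kappa> (t + 1) else 1)"
    using img_in[of t M \<kappa> C] t by (simp add: mu_def)
  have I2: "img M \<kappa> C (t+1) = (if t + 1 \<in> C then qvar * \<kappa> (t+1) else 1) * (if t + 2 \<notin> C then qvar * \<kappa> (t + 2) else 1)"
    using img_in1[of t M \<kappa> C] t by (simp add: mu_def)
  show ?thesis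
  proof (cases "t \<in> C"; cases "t + 1 \<in> C"; cases "t + 2 \<in> C")
    assume c: "t \<in> C" "t + 1 \<in> C" "t + 2 \<in> C"
    have "qvar * \<kappa> t = lam (Suc r)" using i1 I1 c by simp
    hence a: "\<kappa> t = lam r" using qBase_lam[OF B0] by blast
    have "qvar * \<kappa> (t+1) \<in> UB" using i2 I2 c by simp
    hence "\<kappa> (t+1) \<in> UB" using qBase_UB[OF B1] by blast
    thus ?thesis using a c by blast
  next
    assume c: "t \<in> C" "t + 1 \<in> C" "t + 2 \<notin> C"
    have "qvar * \<kappa> t = lam (Suc r)" using i1 I1 c by simp
    hence a: "\<kappa> t = lam r" using qBase_lam[OF B0] by blast
    have "(qvar * \<kappa> (t+1)) * (qvar * \<kappa> (t+2)) \<in> UB" using i2 I2 c by simp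
    hence "(\<kappa> (t+1) \<in> UB \<and> \<kappa> (t+2) \<in> UB) \<or> (\<kappa> (t+1) = lam r \<and> \<kappa> (t+2) = lam r)"
      using prod_UB[OF B1 B2] by blast
    thus ?thesis using a c by blast
  next
    assume c: "t \<in> C" "t + 1 \<notin> C"
    have "(qvar * \<kappa> t) * (qvar * \<kappa> (t+1)) = lam (Suc r)" using i1 I1 c by simp
    thus ?thesis using prod_ne_lam[OF B0 B1] by blast
  next
    assume c: "t \<in> C" "t + 1 \<notin> C"
    have "(qvar * \<kappa> t) * (qvar * \<kappa> (t+1)) = lam (Suc r)" using i1 I1 c by simp
    thus ?thesis using prod_ne_lam[OF B0 B1] by blast
  next
    assume c: "t \<notin> C" "t + 1 \<in> C"
    have "1 = lam (Suc r)" using i1 I1 c by simp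
    thus ?thesis using lam_ne1 by metis
  next
    assume c: "t \<notin> C" "t + 1 \<in> C"
    have "1 = lam (Suc r)" using i1 I1 c by simp
    thus ?thesis using lam_ne1 by metis
  next
    assume c: "t \<notin> C" "t + 1 \<notin> C" "t + 2 \<in> C"
    have "qvar * \<kappa> (t+1) = lam (Suc r)" using i1 I1 c by simp
    hence a: "\<kappa> (t+1) = lam r" using qBase_lam[OF B1] by blast
    thus ?thesis using a c by blast
  next
    assume c: "t \<notin> C" "t + 1 \<notin> C" "t + 2 \<notin> C"
    have "qvar * \<kappa> (t+1) = lam (Suc r)" using i1 I1 c by simp
    hence a: "\<kappa> (t+1) = lam r" using qBase_lam[OF B1] by blast
    have "qvar * \<kappa> (t+2) \<in> UB" using i2 I2 c by simp
    hence "\<kappa> (t+2) \<in> UB" using qBase_UB[OF B2] by blast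
    thus ?thesis using a c by blast
  qed
qed

lemma classify2:
  assumes inv: "Inv r (M+1) w" and wk: "w \<kappa> \<noteq> 0" and t: "1 \<le> t" "t + 1 \<le> M"
    and i1: "img M \<kappa> C t \<in> UB" and i2: "img M \<kappa> C (t+1) = lam (Suc r)"
  shows "(t \<in> C \<and> t+1 \<in> C \<and> t+2 \<in> C \<and> \<kappa> (t+1) = lam r \<and> \<kappa> t \<in> UB) \<or>
        (t \<notin> C \<and> t+1 \<in> C \<and> t+2 \<in> C \<and> \<kappa> (t+1) = lam r) \<or>
        (t \<in> C \<and> t+1 \<notin> C \<and> t+2 \<notin> C \<and> \<kappa> (t+2) = lam r \<and> ((\<kappa> t \<in> UB \<and> \<kappa> (t+1) \<in> UB) \<or> (\<kappa> t = lam r \<and> \<kappa> (t+1) = lam r))) \<or>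
        (t \<notin> C \<and> t+1 \<notin> C \<and> t+2 \<notin> C \<and> \<kappa> (t+2) = lam r \<and> \<kappa> (t+1) \<in> UB)"
proof -
  have B0: "Base r (\<kappa> t)" and B1: "Base r (\<kappa> (t+1))" and B2: "Base r (\<kappa> (t+2))"
    using InvD(3)[OF inv wk] t by auto
  have I1: "img M \<kappa> C t = (if t \<in> C then qvar * \<kappa> t else 1) * (if t + 1 \<notin> C then qvar * \<kappa> (t + 1) else 1)"
    using img_in[of t M \<kappa> C] t by (simp add: mu_def)
  have I2: "img M \<kappa> C (t+1) = (if t + 1 \<in> C then qvar * \<kappa> (t+1) else 1) * (if t + 2 \<notin> C then qvar * \<kappa> (t + 2) else 1)"
    using img_in1[of t M \<kappa> C] t by (simp add: mu_def)
  show ?thesis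
  proof (cases "t + 1 \<in> C"; cases "t + 2 \<in> C"; cases "t \<in> C")
    assume c: "t + 1 \<in> C" "t + 2 \<in> C" "t \<in> C"
    have "qvar * \<kappa> (t+1) = lam (Suc r)" using i2 I2 c by simp
    hence a: "\<kappa> (t+1) = lam r" using qBase_lam[OF B1] by blast
    have "qvar * \<kappa> t \<in> UB" using i1 I1 c by simp
    hence "\<kappa> t \<in> UB" using qBase_UB[OF B0] by blast
    thus ?thesis using a c by blast
  next
    assume c: "t + 1 \<in> C" "t + 2 \<in> C" "t \<notin> C"
    have "qvar * \<kappa> (t+1) = lam (Suc r)" using i2 I2 c by simp
    hence a: "\<kappa> (t+1) = lam r" using qBase_lam[OF B1] by blast
    thus ?thesis using a c by blast
  next
    assume c: "t + 1 \<in> C" "t + 2 \<notin> C"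
    have "(qvar * \<kappa> (t+1)) * (qvar * \<kappa> (t+2)) = lam (Suc r)" using i2 I2 c by simp
    thus ?thesis using prod_ne_lam[OF B1 B2] by blast
  next
    assume c: "t + 1 \<in> C" "t + 2 \<notin> C"
    have "(qvar * \<kappa> (t+1)) * (qvar * \<kappa> (t+2)) = lam (Suc r)" using i2 I2 c by simp
    thus ?thesis using prod_ne_lam[OF B1 B2] by blast
  next
    assume c: "t + 1 \<notin> C" "t + 2 \<in> C"
    have "1 = lam (Suc r)" using i2 I2 c by simp
    thus ?thesis using lam_ne1 by metis
  next
    assume c: "t + 1 \<notin> C" "t + 2 \<in> C"
    have "1 = lam (Suc r)" using i2 I2 c by simp
    thus ?thesis using lam_ne1 by metis
  next
    assume c: "t + 1 \<notin> C" "t + 2 \<notin> C" "t \<in> C"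
    have "qvar * \<kappa> (t+2) = lam (Suc r)" using i2 I2 c by simp
    hence a: "\<kappa> (t+2) = lam r" using qBase_lam[OF B2] by blast
    have "(qvar * \<kappa> t) * (qvar * \<kappa> (t+1)) \<in> UB" using i1 I1 c by simp
    hence "(\<kappa> t \<in> UB \<and> \<kappa> (t+1) \<in> UB) \<or> (\<kappa> t = lam r \<and> \<kappa> (t+1) = lam r)"
      using prod_UB[OF B0 B1] by blast
    thus ?thesis using a c by blast
  next
    assume c: "t + 1 \<notin> C" "t + 2 \<notin> C" "t \<notin> C"
    have "qvar * \<kappa> (t+2) = lam (Suc r)" using i2 I2 c by simp
    hence a: "\<kappa> (t+2) = lam r" using qBase_lam[OF B2] by blast
    have "qvar * \<kappa> (t+1) \<in> UB" using i1 I1 c by simp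
    hence "\<kappa> (t+1) \<in> UB" using qBase_UB[OF B1] by blast
    thus ?thesis using a c by blast
  qed
qed

lemma fct_nz: "Base r (\<kappa> s) \<Longrightarrow> fct \<kappa> C s \<noteq> 0"
  unfolding fct_def mu_def using qBase_ne1[of r "\<kappa> s"] Base_nz[of r "\<kappa> s"] by auto

lemma cancel_nz: "(a::rat fls) * X = b * Y \<Longrightarrow> X = Y \<Longrightarrow> X \<noteq> 0 \<Longrightarrow> a = b"
  by simp

lemma fct_in: "s \<in> C \<Longrightarrow> fct \<kappa> C s = qvar * \<kappa> s / (qvar * \<kappa> s - 1)"
  unfolding fct_def mu_def by simp
lemma fct_out: "s \<notin> C \<Longrightarrow> fct \<kappa> C s = - 1 / (qvar * \<kappa> s - 1)"
  unfolding fct_def mu_def by simp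

lemma swp1_at: "swp (t+1) \<kappa> (t+1) = \<kappa> (t+2)" "swp (t+1) \<kappa> (t+2) = \<kappa> (t+1)"
  "s \<noteq> t + 1 \<Longrightarrow> s \<noteq> t + 2 \<Longrightarrow> swp (t+1) \<kappa> s = \<kappa> s"
  unfolding swp_def by (auto simp: t12)

lemma rot_at: "rot t \<kappa> t = \<kappa> (t+1)" "rot t \<kappa> (t+1) = \<kappa> (t+2)" "rot t \<kappa> (t+2) = \<kappa> t"
  "s \<noteq> t \<Longrightarrow> s \<noteq> t + 1 \<Longrightarrow> s \<noteq> t + 2 \<Longrightarrow> rot t \<kappa> s = \<kappa> s"
  unfolding rot_def by auto

definition Rel :: "int \<Rightarrow> int \<Rightarrow> nat \<Rightarrow> int \<Rightarrow> coef \<Rightarrow> key \<Rightarrow> int set \<Rightarrow> key \<Rightarrow> int set \<Rightarrow> bool" where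
  "Rel M c r t w \<kappa> C \<kappa>2 C2 \<longleftrightarrow>
     - (w \<kappa>2 * wt M c \<kappa>2 C2 * img M \<kappa> C (t+1)) = w \<kappa> * wt M c \<kappa> C * lam (Suc r)"

lemma caseA1:
  assumes inv: "Inv r (M+1) w" and t: "1 \<le> t" "t + 1 \<le> M"
    and c: "t \<in> C" "t + 1 \<in> C" "t + 2 \<in> C"
    and v: "\<kappa> t = lam r" "\<kappa> (t+1) \<in> UB" "Base r (\<kappa> (t+2))"
  shows "img M (swp t \<kappa>) C = swp t (img M \<kappa> C)" "Rel M c r t w \<kappa> C (swp t \<kappa>) C"
proof -
  have B: "Base r (\<kappa> t)" "Base r (\<kappa> (t+1))" "Base r (\<kappa> (t+2))" using v unfolding Base_def by auto
  show "img M (swp t \<kappa>) C = swp t (img M \<kappa> C)"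
  proof (rule img_swp_eq)
    show "img M (swp t \<kappa>) C t = img M \<kappa> C (t + 1)"
      using t c by (simp add: img_in[of t M] img_in1 mu_def swp_at)
    show "img M (swp t \<kappa>) C (t + 1) = img M \<kappa> C t"
      using t c by (simp add: img_in[of t M] img_in1 mu_def swp_at)
  qed (use c in \<open>auto simp: swp_at\<close>)
  have W: "wt M c (swp t \<kappa>) C * (fct \<kappa> C t * fct \<kappa> C (t+1) * fct \<kappa> C (t+2)) =
         wt M c \<kappa> C * (fct (swp t \<kappa>) C t * fct (swp t \<kappa>) C (t+1) * fct (swp t \<kappa>) C (t+2))"
    by (rule wt_local) (use t in \<open>auto simp: swp_at\<close>)
  have fe: "fct (swp t \<kappa>) C t * fct (swp t \<kappa>) C (t+1) * fct (swp t \<kappa>) C (t+2) = fct \<kappa> C t * fct \<kappa> C (t+1) * fct \<kappa> C (t+2)"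
  proof -
    have "fct (swp t \<kappa>) C t = fct \<kappa> C (t+1)" "fct (swp t \<kappa>) C (t+1) = fct \<kappa> C t"
      "fct (swp t \<kappa>) C (t+2) = fct \<kappa> C (t+2)"
      using c by (simp_all add: fct_in swp_at)
    thus ?thesis by (simp only: mult.commute)
  qed
  have fnz: "fct \<kappa> C t * fct \<kappa> C (t+1) * fct \<kappa> C (t+2) \<noteq> 0" using fct_nz B by auto
  have wte: "wt M c (swp t \<kappa>) C = wt M c \<kappa> C" using cancel_nz[OF W[unfolded fe] refl fnz] .
  have P: "w \<kappa> * \<kappa> t = - (w (swp t \<kappa>) * \<kappa> (t + 1))"
    by (rule InvD(4)[OF inv]) (use t v in auto)
  have u: "img M \<kappa> C (t+1) = qvar * \<kappa> (t+1)" using t c by (simp add: img_in1 mu_def)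
  have e1: "lam (Suc r) = qvar * \<kappa> t" using v(1) q_lam by simp
  have "w \<kappa> * wt M c \<kappa> C * (qvar * \<kappa> t) = (w \<kappa> * \<kappa> t) * (wt M c \<kappa> C * qvar)"
    by (simp add: algebra_simps)
  also have "\<dots> = - (w (swp t \<kappa>) * \<kappa> (t + 1)) * (wt M c \<kappa> C * qvar)" using P by simp
  also have "\<dots> = - (w (swp t \<kappa>) * wt M c \<kappa> C * (qvar * \<kappa> (t+1)))" by (simp add: algebra_simps)
  finally show "Rel M c r t w \<kappa> C (swp t \<kappa>) C"
    unfolding Rel_def wte u e1 by simp
qed

lemma caseA2:
  assumes inv: "Inv r (M+1) w" and t: "1 \<le> t" "t + 1 \<le> M"
    and c: "t \<in> C" "t + 1 \<in> C" "t + 2 \<notin> C"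
    and v: "\<kappa> t = lam r" "(\<kappa> (t+1) \<in> UB \<and> \<kappa> (t+2) \<in> UB) \<or> (\<kappa> (t+1) = lam r \<and> \<kappa> (t+2) = lam r)"
  shows "img M (rot t \<kappa>) (C - {t+1}) = swp t (img M \<kappa> C)" "Rel M c r t w \<kappa> C (rot t \<kappa>) (C - {t+1})"
proof -
  have B: "Base r (\<kappa> t)" "Base r (\<kappa> (t+1))" "Base r (\<kappa> (t+2))" using v unfolding Base_def by auto
  show "img M (rot t \<kappa>) (C - {t+1}) = swp t (img M \<kappa> C)"
  proof (rule img_swp_eq)
    show "img M (rot t \<kappa>) (C - {t+1}) t = img M \<kappa> C (t + 1)"
      using t c by (simp add: img_in[of t M] img_in1 mu_def rot_at)
    show "img M (rot t \<kappa>) (C - {t+1}) (t + 1) = img M \<kappa> C t"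
      using t c by (simp add: img_in[of t M] img_in1 mu_def rot_at)
  qed (use c in \<open>auto simp: rot_at\<close>)
  have W: "wt M c (rot t \<kappa>) (C - {t+1}) * (fct \<kappa> C t * fct \<kappa> C (t+1) * fct \<kappa> C (t+2)) =
         wt M c \<kappa> C * (fct (rot t \<kappa>) (C - {t+1}) t * fct (rot t \<kappa>) (C - {t+1}) (t+1) * fct (rot t \<kappa>) (C - {t+1}) (t+2))"
  proof (rule wt_local)
    show "rot t \<kappa> (M + 1) = \<kappa> (M + 1)" if "M + 1 \<in> C"
    proof -
      have "2 + t \<notin> C" using c(3) by (simp add: add.commute)
      thus ?thesis using that c t by (intro rot_at(4)) auto
    qed
  qed (use t in \<open>auto simp: rot_at\<close>)
  have f1: "fct \<kappa> C t * fct \<kappa> C (t+1) * fct \<kappa> C (t+2) =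
    qvar * \<kappa> t / (qvar * \<kappa> t - 1) * (qvar * \<kappa> (t+1) / (qvar * \<kappa> (t+1) - 1)) * (- 1 / (qvar * \<kappa> (t+2) - 1))"
    using c by (simp add: fct_in fct_out)
  have f2: "fct (rot t \<kappa>) (C - {t+1}) t * fct (rot t \<kappa>) (C - {t+1}) (t+1) * fct (rot t \<kappa>) (C - {t+1}) (t+2) =
    qvar * \<kappa> (t+1) / (qvar * \<kappa> (t+1) - 1) * (- 1 / (qvar * \<kappa> (t+2) - 1)) * (- 1 / (qvar * \<kappa> t - 1))"
    using c by (simp add: fct_in fct_out rot_at)
  have fe: "fct \<kappa> C t * fct \<kappa> C (t+1) * fct \<kappa> C (t+2) =
     (- (qvar * \<kappa> t)) * (fct (rot t \<kappa>) (C - {t+1}) t * fct (rot t \<kappa>) (C - {t+1}) (t+1) * fct (rot t \<kappa>) (C - {t+1}) (t+2))"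
    unfolding f1 f2 by (simp add: field_simps)
  have fnz: "fct (rot t \<kappa>) (C - {t+1}) t * fct (rot t \<kappa>) (C - {t+1}) (t+1) * fct (rot t \<kappa>) (C - {t+1}) (t+2) \<noteq> 0"
    using fct_nz[of r "rot t \<kappa>"] B by (auto simp: rot_at)
  have wte: "wt M c (rot t \<kappa>) (C - {t+1}) * (- (qvar * \<kappa> t)) = wt M c \<kappa> C"
  proof -
    have "(wt M c (rot t \<kappa>) (C - {t+1}) * (- (qvar * \<kappa> t))) * (fct (rot t \<kappa>) (C - {t+1}) t * fct (rot t \<kappa>) (C - {t+1}) (t+1) * fct (rot t \<kappa>) (C - {t+1}) (t+2))
       = wt M c \<kappa> C * (fct (rot t \<kappa>) (C - {t+1}) t * fct (rot t \<kappa>) (C - {t+1}) (t+1) * fct (rot t \<kappa>) (C - {t+1}) (t+2))"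
      using W[unfolded fe] by (simp only: mult.assoc)
    thus ?thesis using mult_right_cancel[OF fnz] by blast
  qed
  have R: "w \<kappa> * (lam r * lam r) = w (rot t \<kappa>) * (\<kappa> (t+1) * \<kappa> (t+2))"
    by (rule rot_rel[OF inv]) (use t v in auto)
  have u: "img M \<kappa> C (t+1) = qvar * \<kappa> (t+1) * (qvar * \<kappa> (t+2))" using t c by (simp add: img_in1 mu_def)
  have e1: "lam (Suc r) = qvar * \<kappa> t" using v(1) q_lam by simp
  have "w \<kappa> * wt M c \<kappa> C * (qvar * \<kappa> t) = - (wt M c (rot t \<kappa>) (C - {t+1}) * qvar * qvar) * (w \<kappa> * (lam r * lam r))"
    unfolding wte[symmetric] v(1) by (simp add: algebra_simps)
  also have "\<dots> = - (w (rot t \<kappa>) * wt M c (rot t \<kappa>) (C - {t+1}) * (qvar * \<kappa> (t+1) * (qvar * \<kappa> (t+2))))"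
    unfolding R by (simp add: algebra_simps)
  finally show "Rel M c r t w \<kappa> C (rot t \<kappa>) (C - {t+1})"
    unfolding Rel_def u e1 by simp
qed

lemma caseB1:
  assumes inv: "Inv r (M+1) w" and t: "1 \<le> t" "t + 1 \<le> M"
    and c: "t \<notin> C" "t + 1 \<notin> C" "t + 2 \<in> C"
    and v: "\<kappa> (t+1) = lam r" "Base r (\<kappa> t)" "Base r (\<kappa> (t+2))"
  shows "img M \<kappa> (insert (t+1) C) = swp t (img M \<kappa> C)" "Rel M c r t w \<kappa> C \<kappa> (insert (t+1) C)"
proof -
  have B: "Base r (\<kappa> t)" "Base r (\<kappa> (t+1))" "Base r (\<kappa> (t+2))" using v unfolding Base_def by auto
  show "img M \<kappa> (insert (t+1) C) = swp t (img M \<kappa> C)"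
  proof (rule img_swp_eq)
    show "img M \<kappa> (insert (t+1) C) t = img M \<kappa> C (t + 1)"
      using t c by (simp add: img_in[of t M] img_in1 mu_def)
    show "img M \<kappa> (insert (t+1) C) (t + 1) = img M \<kappa> C t"
      using t c by (simp add: img_in[of t M] img_in1 mu_def)
  qed auto
  have W: "wt M c \<kappa> (insert (t+1) C) * (fct \<kappa> C t * fct \<kappa> C (t+1) * fct \<kappa> C (t+2)) =
         wt M c \<kappa> C * (fct \<kappa> (insert (t+1) C) t * fct \<kappa> (insert (t+1) C) (t+1) * fct \<kappa> (insert (t+1) C) (t+2))"
    by (rule wt_local) (use t in auto)
  have fe: "fct \<kappa> (insert (t+1) C) t * fct \<kappa> (insert (t+1) C) (t+1) * fct \<kappa> (insert (t+1) C) (t+2) =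
     (- (qvar * \<kappa> (t+1))) * (fct \<kappa> C t * fct \<kappa> C (t+1) * fct \<kappa> C (t+2))"
    using c by (simp add: fct_in fct_out field_simps)
  have fnz: "fct \<kappa> C t * fct \<kappa> C (t+1) * fct \<kappa> C (t+2) \<noteq> 0" using fct_nz B by auto
  have wte: "wt M c \<kappa> (insert (t+1) C) = wt M c \<kappa> C * (- (qvar * \<kappa> (t+1)))"
  proof -
    have "wt M c \<kappa> (insert (t+1) C) * (fct \<kappa> C t * fct \<kappa> C (t+1) * fct \<kappa> C (t+2)) =
      (wt M c \<kappa> C * (- (qvar * \<kappa> (t+1)))) * (fct \<kappa> C t * fct \<kappa> C (t+1) * fct \<kappa> C (t+2))"
      using W[unfolded fe] by (simp only: mult.assoc)
    thus ?thesis using mult_right_cancel[OF fnz] by blast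
  qed
  have u: "img M \<kappa> C (t+1) = 1" using t c by (simp add: img_in1 mu_def)
  have e1: "lam (Suc r) = qvar * \<kappa> (t+1)" using v(1) q_lam by simp
  show "Rel M c r t w \<kappa> C \<kappa> (insert (t+1) C)"
    unfolding Rel_def u e1 wte by (simp add: algebra_simps)
qed

lemma caseB2:
  assumes inv: "Inv r (M+1) w" and t: "1 \<le> t" "t + 1 \<le> M"
    and c: "t \<notin> C" "t + 1 \<notin> C" "t + 2 \<notin> C"
    and v: "\<kappa> (t+1) = lam r" "\<kappa> (t+2) \<in> UB" "Base r (\<kappa> t)"
  shows "img M (swp (t+1) \<kappa>) C = swp t (img M \<kappa> C)" "Rel M c r t w \<kappa> C (swp (t+1) \<kappa>) C"
proof -
  have B: "Base r (\<kappa> t)" "Base r (\<kappa> (t+1))" "Base r (\<kappa> (t+2))" using v unfolding Base_def by auto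
  show "img M (swp (t+1) \<kappa>) C = swp t (img M \<kappa> C)"
  proof (rule img_swp_eq)
    show "img M (swp (t+1) \<kappa>) C t = img M \<kappa> C (t + 1)"
      using t c by (simp add: img_in[of t M] img_in1 mu_def swp1_at)
    show "img M (swp (t+1) \<kappa>) C (t + 1) = img M \<kappa> C t"
      using t c by (simp add: img_in[of t M] img_in1 mu_def swp1_at)
  qed (use c in \<open>auto simp: swp1_at\<close>)
  have W: "wt M c (swp (t+1) \<kappa>) C * (fct \<kappa> C t * fct \<kappa> C (t+1) * fct \<kappa> C (t+2)) =
         wt M c \<kappa> C * (fct (swp (t+1) \<kappa>) C t * fct (swp (t+1) \<kappa>) C (t+1) * fct (swp (t+1) \<kappa>) C (t+2))"
  proof (rule wt_local)
    show "swp (t+1) \<kappa> (M + 1) = \<kappa> (M + 1)" if "M + 1 \<in> C"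
    proof -
      have "2 + t \<notin> C" "1 + t \<notin> C" using c(2,3) by (simp_all add: add.commute)
      thus ?thesis using that c t by (intro swp1_at(3)) auto
    qed
  qed (use t in \<open>auto simp: swp1_at\<close>)
  have fe: "fct (swp (t+1) \<kappa>) C t * fct (swp (t+1) \<kappa>) C (t+1) * fct (swp (t+1) \<kappa>) C (t+2) = fct \<kappa> C t * fct \<kappa> C (t+1) * fct \<kappa> C (t+2)"
  proof -
    have "fct (swp (t+1) \<kappa>) C t = fct \<kappa> C t" "fct (swp (t+1) \<kappa>) C (t+1) = fct \<kappa> C (t+2)"
      "fct (swp (t+1) \<kappa>) C (t+2) = fct \<kappa> C (t+1)"
      using c by (simp_all add: fct_out swp1_at)
    thus ?thesis by (simp only: mult.commute mult.left_commute)
  qed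
  have fnz: "fct \<kappa> C t * fct \<kappa> C (t+1) * fct \<kappa> C (t+2) \<noteq> 0" using fct_nz B by auto
  have wte: "wt M c (swp (t+1) \<kappa>) C = wt M c \<kappa> C" using cancel_nz[OF W[unfolded fe] refl fnz] .
  have P0: "w \<kappa> * \<kappa> (t+1) = - (w (swp (t+1) \<kappa>) * \<kappa> (t + 1 + 1))"
    by (rule InvD(4)[OF inv]) (use t v in \<open>auto simp: t12\<close>)
  have P: "w \<kappa> * \<kappa> (t+1) = - (w (swp (t+1) \<kappa>) * \<kappa> (t + 2))" using P0 unfolding t12 .
  have u: "img M \<kappa> C (t+1) = qvar * \<kappa> (t+2)" using t c by (simp add: img_in1 mu_def)
  have e1: "lam (Suc r) = qvar * \<kappa> (t+1)" using v(1) q_lam by simp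
  have "w \<kappa> * wt M c \<kappa> C * (qvar * \<kappa> (t+1)) = (w \<kappa> * \<kappa> (t+1)) * (wt M c \<kappa> C * qvar)"
    by (simp add: algebra_simps)
  also have "\<dots> = - (w (swp (t+1) \<kappa>) * \<kappa> (t + 2)) * (wt M c \<kappa> C * qvar)" using P by simp
  also have "\<dots> = - (w (swp (t+1) \<kappa>) * wt M c \<kappa> C * (qvar * \<kappa> (t+2)))" by (simp add: algebra_simps)
  finally show "Rel M c r t w \<kappa> C (swp (t+1) \<kappa>) C"
    unfolding Rel_def wte u e1 by simp
qed

lemma rotb_at: "rotb t \<kappa> t = \<kappa> (t+2)" "rotb t \<kappa> (t+1) = \<kappa> t" "rotb t \<kappa> (t+2) = \<kappa> (t+1)"
  unfolding rotb_def by auto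

lemma wt_nz:
  assumes "\<And>s. 1 \<le> s \<Longrightarrow> s \<le> M + 1 \<Longrightarrow> Base r (\<kappa> s)" and M0: "0 \<le> M"
  shows "wt M c \<kappa> C \<noteq> 0"
proof -
  have "\<forall>s\<in>{1..M+1}. fct \<kappa> C s \<noteq> 0" by (intro ballI fct_nz[of r] assms) auto
  hence "(\<Prod>s\<in>{1..M+1}. fct \<kappa> C s) \<noteq> 0" by simp
  moreover have "mu \<kappa> (M+1) \<noteq> 0" if "1 \<le> M + 1"
    using assms(1)[of "M+1"] that Base_nz unfolding mu_def by auto
  ultimately show ?thesis unfolding wt_def using M0 by auto
qed

definition phi :: "int \<Rightarrow> key \<times> int set \<Rightarrow> key \<times> int set" where
  "phi t x = (let \<kappa> = fst x; C = snd x in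
     if t \<in> C \<and> t+1 \<in> C \<and> t+2 \<in> C then (swp t \<kappa>, C)
     else if t \<in> C \<and> t+1 \<in> C then (rot t \<kappa>, C - {t+1})
     else if t+2 \<in> C then (\<kappa>, insert (t+1) C)
     else (swp (t+1) \<kappa>, C))"

definition psi :: "int \<Rightarrow> key \<times> int set \<Rightarrow> key \<times> int set" where
  "psi t x = (let \<kappa> = fst x; C = snd x in
     if t \<in> C \<and> t+1 \<in> C \<and> t+2 \<in> C then (swp t \<kappa>, C)
     else if t+1 \<in> C \<and> t+2 \<in> C then (\<kappa>, C - {t+1})
     else if t \<in> C then (rotb t \<kappa>, insert (t+1) C)
     else (swp (t+1) \<kappa>, C))"

lemma swp1_swp1: "swp (t+1) (swp (t+1) \<kappa>) = \<kappa>" by simp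

lemma phi_good:
  assumes inv: "Inv r (M+1) w" and t: "1 \<le> t" "t + 1 \<le> M"
    and wk: "w \<kappa> \<noteq> 0" and i1: "img M \<kappa> C t = lam (Suc r)" and i2: "img M \<kappa> C (t+1) \<in> UB"
  shows "img M (fst (phi t (\<kappa>, C))) (snd (phi t (\<kappa>, C))) = swp t (img M \<kappa> C)"
    and "Rel M c r t w \<kappa> C (fst (phi t (\<kappa>, C))) (snd (phi t (\<kappa>, C)))"
    and "psi t (phi t (\<kappa>, C)) = (\<kappa>, C)"
    and "C \<subseteq> {1..M+1} \<Longrightarrow> snd (phi t (\<kappa>, C)) \<subseteq> {1..M+1}"
proof -
  have B2: "Base r (\<kappa> (t+2))" "Base r (\<kappa> t)" using InvD(3)[OF inv wk] t by auto
  note cl = classify1[OF inv wk t i1 i2]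
  have "(img M (fst (phi t (\<kappa>, C))) (snd (phi t (\<kappa>, C))) = swp t (img M \<kappa> C)
     \<and> Rel M c r t w \<kappa> C (fst (phi t (\<kappa>, C))) (snd (phi t (\<kappa>, C))))
     \<and> psi t (phi t (\<kappa>, C)) = (\<kappa>, C)
     \<and> (C \<subseteq> {1..M+1} \<longrightarrow> snd (phi t (\<kappa>, C)) \<subseteq> {1..M+1})"
    using cl
  proof (elim disjE)
    assume h: "t \<in> C \<and> t+1 \<in> C \<and> t+2 \<in> C \<and> \<kappa> t = lam r \<and> \<kappa> (t+1) \<in> UB"
    hence c: "t \<in> C" "t + 1 \<in> C" "t + 2 \<in> C" and v: "\<kappa> t = lam r" "\<kappa> (t+1) \<in> UB" by auto
    have p: "phi t (\<kappa>, C) = (swp t \<kappa>, C)" using c by (simp add: phi_def)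
    have q: "psi t (swp t \<kappa>, C) = (\<kappa>, C)" using c by (simp add: psi_def)
    show ?thesis unfolding p q using caseA1[OF inv t c v B2(1)] by simp
  next
    assume h: "t \<in> C \<and> t+1 \<in> C \<and> t+2 \<notin> C \<and> \<kappa> t = lam r \<and> ((\<kappa> (t+1) \<in> UB \<and> \<kappa> (t+2) \<in> UB) \<or> (\<kappa> (t+1) = lam r \<and> \<kappa> (t+2) = lam r))"
    hence c: "t \<in> C" "t + 1 \<in> C" "t + 2 \<notin> C" and v: "\<kappa> t = lam r"
      and ab: "(\<kappa> (t+1) \<in> UB \<and> \<kappa> (t+2) \<in> UB) \<or> (\<kappa> (t+1) = lam r \<and> \<kappa> (t+2) = lam r)" by auto
    have p: "phi t (\<kappa>, C) = (rot t \<kappa>, C - {t+1})" using c by (simp add: phi_def)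
    have q: "psi t (rot t \<kappa>, C - {t+1}) = (\<kappa>, C)" using c by (auto simp: psi_def insert_absorb)
    show ?thesis unfolding p q using caseA2[OF inv t c v ab] by auto
  next
    assume h: "t \<notin> C \<and> t+1 \<notin> C \<and> t+2 \<in> C \<and> \<kappa> (t+1) = lam r"
    hence c: "t \<notin> C" "t + 1 \<notin> C" "t + 2 \<in> C" and v: "\<kappa> (t+1) = lam r" by auto
    have p: "phi t (\<kappa>, C) = (\<kappa>, insert (t+1) C)" using c by (simp add: phi_def)
    have q: "psi t (\<kappa>, insert (t+1) C) = (\<kappa>, C)" using c by (auto simp: psi_def)
    show ?thesis unfolding p q using caseB1[OF inv t c v B2(2) B2(1)] t by auto
  next
    assume h: "t \<notin> C \<and> t+1 \<notin> C \<and> t+2 \<notin> C \<and> \<kappa> (t+1) = lam r \<and> \<kappa> (t+2) \<in> UB"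
    hence c: "t \<notin> C" "t + 1 \<notin> C" "t + 2 \<notin> C" and v: "\<kappa> (t+1) = lam r" "\<kappa> (t+2) \<in> UB" by auto
    have p: "phi t (\<kappa>, C) = (swp (t+1) \<kappa>, C)" using c by (simp add: phi_def)
    have q: "psi t (swp (t+1) \<kappa>, C) = (\<kappa>, C)" using c by (simp add: psi_def)
    show ?thesis unfolding p q using caseB2[OF inv t c v B2(2)] by simp
  qed
  thus "img M (fst (phi t (\<kappa>, C))) (snd (phi t (\<kappa>, C))) = swp t (img M \<kappa> C)"
    and "Rel M c r t w \<kappa> C (fst (phi t (\<kappa>, C))) (snd (phi t (\<kappa>, C)))"
    and "psi t (phi t (\<kappa>, C)) = (\<kappa>, C)"
    and "C \<subseteq> {1..M+1} \<Longrightarrow> snd (phi t (\<kappa>, C)) \<subseteq> {1..M+1}" by auto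
qed

lemma psi_good:
  assumes inv: "Inv r (M+1) w" and t: "1 \<le> t" "t + 1 \<le> M"
    and wk: "w \<kappa> \<noteq> 0" and i1: "img M \<kappa> C t \<in> UB" and i2: "img M \<kappa> C (t+1) = lam (Suc r)"
  shows "img M (fst (psi t (\<kappa>, C))) (snd (psi t (\<kappa>, C))) = swp t (img M \<kappa> C)"
    and "Rel M c r t w (fst (psi t (\<kappa>, C))) (snd (psi t (\<kappa>, C))) \<kappa> C"
    and "phi t (psi t (\<kappa>, C)) = (\<kappa>, C)"
    and "C \<subseteq> {1..M+1} \<Longrightarrow> snd (psi t (\<kappa>, C)) \<subseteq> {1..M+1}"
proof -
  have B: "Base r (\<kappa> t)" "Base r (\<kappa> (t+1))" "Base r (\<kappa> (t+2))" using InvD(3)[OF inv wk] t by auto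
  note cl = classify2[OF inv wk t i1 i2]
  have "(img M (fst (psi t (\<kappa>, C))) (snd (psi t (\<kappa>, C))) = swp t (img M \<kappa> C)
     \<and> Rel M c r t w (fst (psi t (\<kappa>, C))) (snd (psi t (\<kappa>, C))) \<kappa> C)
     \<and> phi t (psi t (\<kappa>, C)) = (\<kappa>, C)
     \<and> (C \<subseteq> {1..M+1} \<longrightarrow> snd (psi t (\<kappa>, C)) \<subseteq> {1..M+1})"
    using cl
  proof (elim disjE)
    assume h: "t \<in> C \<and> t+1 \<in> C \<and> t+2 \<in> C \<and> \<kappa> (t+1) = lam r \<and> \<kappa> t \<in> UB"
    hence c: "t \<in> C" "t + 1 \<in> C" "t + 2 \<in> C" and v: "\<kappa> (t+1) = lam r" "\<kappa> t \<in> UB" by auto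
    have p: "psi t (\<kappa>, C) = (swp t \<kappa>, C)" using c by (simp add: psi_def)
    have q: "phi t (swp t \<kappa>, C) = (\<kappa>, C)" using c by (simp add: phi_def)
    have v': "swp t \<kappa> t = lam r" "swp t \<kappa> (t+1) \<in> UB" "Base r (swp t \<kappa> (t+2))"
      using v B by (auto simp: swp_at)
    note cs = caseA1[OF inv t c v']
    show ?thesis unfolding p using cs q by (simp add: p)
  next
    assume h: "t \<notin> C \<and> t+1 \<in> C \<and> t+2 \<in> C \<and> \<kappa> (t+1) = lam r"
    hence c: "t \<notin> C" "t + 1 \<in> C" "t + 2 \<in> C" and v: "\<kappa> (t+1) = lam r" by auto
    have p: "psi t (\<kappa>, C) = (\<kappa>, C - {t+1})" using c by (simp add: psi_def)
    have ins: "insert (t+1) (C - {t+1}) = C" using c by auto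
    have q: "phi t (\<kappa>, C - {t+1}) = (\<kappa>, C)" using c ins by (simp add: phi_def)
    have c': "t \<notin> C - {t+1}" "t + 1 \<notin> C - {t+1}" "t + 2 \<in> C - {t+1}" using c by auto
    note cs = caseB1[OF inv t c' v B(1) B(3), unfolded ins]
    show ?thesis unfolding p using cs q t by auto
  next
    assume h: "t \<in> C \<and> t+1 \<notin> C \<and> t+2 \<notin> C \<and> \<kappa> (t+2) = lam r \<and> ((\<kappa> t \<in> UB \<and> \<kappa> (t+1) \<in> UB) \<or> (\<kappa> t = lam r \<and> \<kappa> (t+1) = lam r))"
    hence c: "t \<in> C" "t + 1 \<notin> C" "t + 2 \<notin> C" and v: "\<kappa> (t+2) = lam r"
      and ab: "(\<kappa> t \<in> UB \<and> \<kappa> (t+1) \<in> UB) \<or> (\<kappa> t = lam r \<and> \<kappa> (t+1) = lam r)" by auto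
    have p: "psi t (\<kappa>, C) = (rotb t \<kappa>, insert (t+1) C)" using c by (simp add: psi_def)
    have del: "insert (t+1) C - {t+1} = C" using c by auto
    have q: "phi t (rotb t \<kappa>, insert (t+1) C) = (\<kappa>, C)" using c del by (simp add: phi_def)
    have c': "t \<in> insert (t+1) C" "t + 1 \<in> insert (t+1) C" "t + 2 \<notin> insert (t+1) C" using c by auto
    have v': "rotb t \<kappa> t = lam r"
      "(rotb t \<kappa> (t+1) \<in> UB \<and> rotb t \<kappa> (t+2) \<in> UB) \<or> (rotb t \<kappa> (t+1) = lam r \<and> rotb t \<kappa> (t+2) = lam r)"
      using v ab by (auto simp: rotb_at)
    note cs = caseA2[OF inv t c' v', unfolded del rot_rotb]
    show ?thesis unfolding p using cs q t by auto
  next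
    assume h: "t \<notin> C \<and> t+1 \<notin> C \<and> t+2 \<notin> C \<and> \<kappa> (t+2) = lam r \<and> \<kappa> (t+1) \<in> UB"
    hence c: "t \<notin> C" "t + 1 \<notin> C" "t + 2 \<notin> C" and v: "\<kappa> (t+2) = lam r" "\<kappa> (t+1) \<in> UB" by auto
    have p: "psi t (\<kappa>, C) = (swp (t+1) \<kappa>, C)" using c by (simp add: psi_def)
    have q: "phi t (swp (t+1) \<kappa>, C) = (\<kappa>, C)" using c by (simp add: phi_def)
    have v': "swp (t+1) \<kappa> (t+1) = lam r" "swp (t+1) \<kappa> (t+2) \<in> UB" "Base r (swp (t+1) \<kappa> t)"
      using v B by (auto simp: swp1_at)
    note cs = caseB2[OF inv t c v', unfolded swp1_swp1]
    show ?thesis unfolding p using cs q by simp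
  qed
  thus "img M (fst (psi t (\<kappa>, C))) (snd (psi t (\<kappa>, C))) = swp t (img M \<kappa> C)"
    and "Rel M c r t w (fst (psi t (\<kappa>, C))) (snd (psi t (\<kappa>, C))) \<kappa> C"
    and "phi t (psi t (\<kappa>, C)) = (\<kappa>, C)"
    and "C \<subseteq> {1..M+1} \<Longrightarrow> snd (psi t (\<kappa>, C)) \<subseteq> {1..M+1}" by auto
qed

lemma step_P:
  assumes inv: "Inv r (M+1) w" and t: "1 \<le> t" "t + 1 \<le> M"
    and k1: "\<kappa>' t = lam (Suc r)" and k2: "\<kappa>' (t+1) \<in> UB"
  shows "step M c w \<kappa>' * \<kappa>' t = - (step M c w (swp t \<kappa>') * \<kappa>' (t + 1))"
proof -
  let ?D = "supp w \<times> Pow {1..M+1}"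
  let ?A1 = "{x\<in>?D. img M (fst x) (snd x) = \<kappa>'}"
  let ?A2 = "{x\<in>?D. img M (fst x) (snd x) = swp t \<kappa>'}"
  let ?g = "\<lambda>x. w (fst x) * wt M c (fst x) (snd x)"
  have fin: "finite (supp w)" using InvD(1)[OF inv] .
  have M0: "0 \<le> M" using t by simp
  have L0: "lam (Suc r) \<noteq> 0" by (rule lam_nz)
  have u0: "\<kappa>' (t+1) \<noteq> 0" using k2 UB_nz by auto
  have wtnz: "wt M c \<kappa> C \<noteq> 0" if "w \<kappa> \<noteq> 0" for \<kappa> C
    by (rule wt_nz[OF _ M0]) (use InvD(3)[OF inv that] in auto)
  have "(\<Sum>x\<in>?A1. ?g x * lam (Suc r)) = (\<Sum>y\<in>?A2. - (?g y * \<kappa>' (t+1)))"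
  proof (rule sum.reindex_bij_witness[where i = "psi t" and j = "phi t"])
    fix x assume x: "x \<in> ?A1"
    obtain \<kappa> C where xe: "x = (\<kappa>, C)" by (cases x)
    have wk: "w \<kappa> \<noteq> 0" and C: "C \<subseteq> {1..M+1}" and im: "img M \<kappa> C = \<kappa>'"
      using x by (auto simp: xe supp_def)
    have i1: "img M \<kappa> C t = lam (Suc r)" and i2: "img M \<kappa> C (t+1) \<in> UB" using im k1 k2 by auto
    note pg = phi_good[OF inv t wk i1 i2]
    show "psi t (phi t x) = x" using pg(3) by (simp add: xe)
    have R: "- (w (fst (phi t (\<kappa>, C))) * wt M c (fst (phi t (\<kappa>, C))) (snd (phi t (\<kappa>, C))) * \<kappa>' (t+1))
           = w \<kappa> * wt M c \<kappa> C * lam (Suc r)"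
      using pg(2)[of c] unfolding Rel_def im .
    hence "w (fst (phi t (\<kappa>, C))) \<noteq> 0" using wk wtnz[OF wk] L0 by auto
    thus "phi t x \<in> ?A2" using pg(1) pg(4)[OF C] im by (auto simp: xe supp_def mem_Times_iff)
    show "- (?g (phi t x) * \<kappa>' (t+1)) = ?g x * lam (Suc r)" using R by (simp add: xe mult.assoc)
  next
    fix y assume y: "y \<in> ?A2"
    obtain \<kappa> C where ye: "y = (\<kappa>, C)" by (cases y)
    have wk: "w \<kappa> \<noteq> 0" and C: "C \<subseteq> {1..M+1}" and im: "img M \<kappa> C = swp t \<kappa>'"
      using y by (auto simp: ye supp_def)
    have i1: "img M \<kappa> C t \<in> UB" and i2: "img M \<kappa> C (t+1) = lam (Suc r)" using im k1 k2 by (auto simp: swp_at)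
    note pg = psi_good[OF inv t wk i1 i2]
    show "phi t (psi t y) = y" using pg(3) by (simp add: ye)
    have im2: "img M (fst (psi t (\<kappa>, C))) (snd (psi t (\<kappa>, C))) = \<kappa>'" using pg(1) im by simp
    have R: "- (w \<kappa> * wt M c \<kappa> C * img M (fst (psi t (\<kappa>, C))) (snd (psi t (\<kappa>, C))) (t+1))
           = w (fst (psi t (\<kappa>, C))) * wt M c (fst (psi t (\<kappa>, C))) (snd (psi t (\<kappa>, C))) * lam (Suc r)"
      using pg(2)[of c] unfolding Rel_def .
    hence "w (fst (psi t (\<kappa>, C))) \<noteq> 0" using wk wtnz[OF wk] u0 unfolding im2 by auto
    thus "psi t y \<in> ?A1" using im2 pg(4)[OF C] by (auto simp: ye supp_def mem_Times_iff)
  qed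
  hence "(\<Sum>x\<in>?A1. ?g x) * lam (Suc r) = - ((\<Sum>y\<in>?A2. ?g y) * \<kappa>' (t+1))"
    by (simp add: sum_distrib_right sum_negf)
  thus ?thesis using step_as_filter[OF fin, of M c \<kappa>'] step_as_filter[OF fin, of M c "swp t \<kappa>'"] k1 by simp
qed

lemma step_Inv:
  assumes inv: "Inv r (M+1) w" and M0: "0 \<le> M"
  shows "Inv (Suc r) M (step M c w)"
  unfolding Inv_def
proof (intro conjI ballI allI impI)
  show "finite (supp (step M c w))" using step_fin InvD(1)[OF inv] by blast
next
  fix \<kappa>' t assume "\<kappa>' \<in> supp (step M c w)" "t < 1 \<or> t > M"
  thus "\<kappa>' t = 1" using step_norm by (auto simp: supp_def)
next
  fix \<kappa>' t assume "\<kappa>' \<in> supp (step M c w)" "1 \<le> t \<and> t \<le> M"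
  thus "Base (Suc r) (\<kappa>' t)" using step_base[OF inv] by (auto simp: supp_def)
next
  fix \<kappa>' t assume "1 \<le> t" "t + 1 \<le> M" "\<kappa>' t = lam (Suc r)" "\<kappa>' (t + 1) \<in> UB"
  thus "step M c w \<kappa>' * \<kappa>' t = - (step M c w (swp t \<kappa>') * \<kappa>' (t + 1))"
    using step_P[OF inv] by blast
qed

definition kk :: "int \<Rightarrow> int \<Rightarrow> (int \<Rightarrow> int) \<Rightarrow> int \<Rightarrow> int" where
  "kk M c k t = (if t = 0 then 0 else if t = M + 1 then c else k t)"
definition Ival :: "int \<Rightarrow> int \<Rightarrow> int set" where
  "Ival a b = (if a \<le> b then {a..b} else {b+1..a-1})"
definition sgI :: "int \<Rightarrow> int \<Rightarrow> rat fls" where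
  "sgI a b = (if a \<le> b then 1 else -1)"
definition box :: "int \<Rightarrow> int \<Rightarrow> (int \<Rightarrow> int) \<Rightarrow> (int \<Rightarrow> int) set" where
  "box M c k = PiE {1..M+1} (\<lambda>t. Ival (kk M c k (t-1)) (kk M c k t))"
definition sg :: "int \<Rightarrow> int \<Rightarrow> (int \<Rightarrow> int) \<Rightarrow> rat fls" where
  "sg M c k = (\<Prod>t\<in>{1..M+1}. sgI (kk M c k (t-1)) (kk M c k t))"

lemma geo_nat:
  fixes \<mu> :: "rat fls"
  assumes "\<mu> \<noteq> 0"
  shows "(\<Sum>x\<in>{a..a + int N - 1}. \<mu> powi x) * (\<mu> - 1) = \<mu> powi (a + int N) - \<mu> powi a"
proof (induction N)
  case 0
  thus ?case by simp
next
  case (Suc N)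
  have e: "{a..a + int (Suc N) - 1} = insert (a + int N) {a..a + int N - 1}" by auto
  have "(\<Sum>x\<in>{a..a + int (Suc N) - 1}. \<mu> powi x) = \<mu> powi (a + int N) + (\<Sum>x\<in>{a..a + int N - 1}. \<mu> powi x)"
    unfolding e by (subst sum.insert) auto
  hence "(\<Sum>x\<in>{a..a + int (Suc N) - 1}. \<mu> powi x) * (\<mu> - 1) = \<mu> powi (a + int N) * (\<mu> - 1) + (\<mu> powi (a + int N) - \<mu> powi a)"
    using Suc by (simp add: distrib_right)
  also have "\<dots> = \<mu> powi (a + int N) * \<mu> - \<mu> powi a" by (simp add: algebra_simps)
  also have "\<mu> powi (a + int N) * \<mu> = \<mu> powi (a + int (Suc N))"
    using power_int_add_1[of \<mu> "a + int N"] assms by (simp add: ac_simps)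
  finally show ?case .
qed

lemma geo_ival:
  fixes \<mu> :: "rat fls"
  assumes "\<mu> \<noteq> 0" "\<mu> \<noteq> 1"
  shows "(\<Sum>x\<in>Ival a b. sgI a b * \<mu> powi x) = (\<mu> powi (b + 1) - \<mu> powi a) / (\<mu> - 1)"
proof (cases "a \<le> b")
  case True
  define N where "N = nat (b + 1 - a)"
  have bN: "b = a + int N - 1" using True unfolding N_def by simp
  have "(\<Sum>x\<in>{a..b}. \<mu> powi x) * (\<mu> - 1) = \<mu> powi (b + 1) - \<mu> powi a"
    using geo_nat[OF assms(1), of a N] unfolding bN by simp
  moreover have "\<mu> - 1 \<noteq> 0" using assms by simp
  ultimately show ?thesis using True by (simp add: Ival_def sgI_def eq_divide_eq)
next
  case False
  define N where "N = nat (a - 1 - b)"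
  have aN: "a - 1 = (b + 1) + int N - 1" using False unfolding N_def by simp
  have aN': "a = (b + 1) + int N" using False unfolding N_def by simp
  have "(\<Sum>x\<in>{b+1..a-1}. \<mu> powi x) * (\<mu> - 1) = \<mu> powi a - \<mu> powi (b + 1)"
    using geo_nat[OF assms(1), of "b+1" N] unfolding aN by (simp add: aN'[symmetric])
  moreover have "\<mu> - 1 \<noteq> 0" using assms by simp
  ultimately have "(\<Sum>x\<in>{b+1..a-1}. - (\<mu> powi x)) * (\<mu> - 1) = \<mu> powi (b + 1) - \<mu> powi a"
    by (simp add: sum_negf algebra_simps)
  thus ?thesis using False \<open>\<mu> - 1 \<noteq> 0\<close>
    by (simp add: Ival_def sgI_def eq_divide_eq)
qed

lemma power_int_sum:
  fixes x :: "rat fls"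
  assumes "x \<noteq> 0" "finite A"
  shows "x powi (\<Sum>t\<in>A. f t) = (\<Prod>t\<in>A. x powi f t)"
  using assms(2) by (induction A rule: finite_induct) (auto simp: power_int_add assms(1))

lemma box_mon:
  assumes M0: "0 \<le> M" and B: "\<And>s. 1 \<le> s \<Longrightarrow> s \<le> M + 1 \<Longrightarrow> Base r (\<kappa> s)"
  shows "(\<Sum>l\<in>box M c k. sg M c k * qvar powi (\<Sum>t\<in>{1..M+1}. l t) * mon (M+1) \<kappa> l) =
    (\<Prod>t\<in>{1..M+1}. (mu \<kappa> t powi (kk M c k t + 1) - mu \<kappa> t powi (kk M c k (t-1))) / (mu \<kappa> t - 1))"
proof -
  let ?I = "{1..M+1}"
  let ?f = "\<lambda>t x. sgI (kk M c k (t-1)) (kk M c k t) * mu \<kappa> t powi x"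
  have eq: "sg M c k * qvar powi (\<Sum>t\<in>?I. l t) * mon (M+1) \<kappa> l = (\<Prod>t\<in>?I. ?f t (l t))" for l
  proof -
    have "qvar powi (\<Sum>t\<in>?I. l t) * mon (M+1) \<kappa> l = (\<Prod>t\<in>?I. qvar powi l t * \<kappa> t powi l t)"
      unfolding mon_def power_int_sum[of qvar ?I l, OF fls_X_nonzero finite_atLeastAtMost_int] prod.distrib ..
    also have "\<dots> = (\<Prod>t\<in>?I. mu \<kappa> t powi l t)" unfolding mu_def power_int_mult_distrib ..
    finally show ?thesis unfolding sg_def by (simp add: prod.distrib mult.assoc)
  qed
  have "(\<Sum>l\<in>box M c k. sg M c k * qvar powi (\<Sum>t\<in>?I. l t) * mon (M+1) \<kappa> l) =
        (\<Sum>l\<in>box M c k. \<Prod>t\<in>?I. ?f t (l t))" using eq by simp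
  also have "\<dots> = (\<Prod>t\<in>?I. \<Sum>x\<in>Ival (kk M c k (t-1)) (kk M c k t). ?f t x)"
    unfolding box_def by (rule prod_sum_PiE[symmetric]) (auto simp: Ival_def)
  also have "\<dots> = (\<Prod>t\<in>?I. (mu \<kappa> t powi (kk M c k t + 1) - mu \<kappa> t powi (kk M c k (t-1))) / (mu \<kappa> t - 1))"
  proof (rule prod.cong)
    fix t assume t: "t \<in> ?I"
    have "mu \<kappa> t \<noteq> 0" "mu \<kappa> t \<noteq> 1" using B[of t] t Base_nz qBase_ne1 unfolding mu_def by auto
    thus "(\<Sum>x\<in>Ival (kk M c k (t-1)) (kk M c k t). ?f t x) = (mu \<kappa> t powi (kk M c k t + 1) - mu \<kappa> t powi (kk M c k (t-1))) / (mu \<kappa> t - 1)"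
      by (rule geo_ival)
  qed simp
  finally show ?thesis .
qed

lemma P1_lemma:
  assumes M0: "0 \<le> M"
  shows "(\<Prod>t\<in>{1..M+1}. if t \<in> C then mu \<kappa> t powi kk M c k t else 1) =
    (if M + 1 \<in> C then mu \<kappa> (M + 1) powi c else 1) * (\<Prod>s\<in>{1..M}. if s \<in> C then mu \<kappa> s powi k s else 1)"
proof -
  have I: "{1..M+1} = insert (M+1) {1..M}" using M0 by auto
  have "(\<Prod>t\<in>{1..M+1}. if t \<in> C then mu \<kappa> t powi kk M c k t else 1) =
     (if M + 1 \<in> C then mu \<kappa> (M + 1) powi kk M c k (M+1) else 1) * (\<Prod>t\<in>{1..M}. if t \<in> C then mu \<kappa> t powi kk M c k t else 1)"
    unfolding I by (subst prod.insert) auto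
  also have "(\<Prod>t\<in>{1..M}. if t \<in> C then mu \<kappa> t powi kk M c k t else 1) = (\<Prod>s\<in>{1..M}. if s \<in> C then mu \<kappa> s powi k s else 1)"
    by (rule prod.cong) (auto simp: kk_def)
  also have "kk M c k (M+1) = c" using M0 by (simp add: kk_def)
  finally show ?thesis .
qed

lemma P2_lemma:
  assumes M0: "0 \<le> M"
  shows "(\<Prod>t\<in>{1..M+1}. if t \<notin> C then mu \<kappa> t powi kk M c k (t - 1) else 1) =
    (\<Prod>s\<in>{1..M}. if s + 1 \<notin> C then mu \<kappa> (s + 1) powi k s else 1)"
proof -
  have I: "{1..M+1} = insert 1 ((\<lambda>s. s + 1) ` {1..M})" using M0
    using M0 by auto
  have n: "1 \<notin> (\<lambda>s. s + 1) ` {1..M}" by auto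
  have "(\<Prod>t\<in>{1..M+1}. if t \<notin> C then mu \<kappa> t powi kk M c k (t - 1) else 1) =
    (if 1 \<notin> C then mu \<kappa> 1 powi kk M c k 0 else 1) * (\<Prod>t\<in>(\<lambda>s. s + 1) ` {1..M}. if t \<notin> C then mu \<kappa> t powi kk M c k (t - 1) else 1)"
    unfolding I by (subst prod.insert[OF _ n]) auto
  also have "(if 1 \<notin> C then mu \<kappa> 1 powi kk M c k 0 else 1) = 1" by (simp add: kk_def)
  also have "(\<Prod>t\<in>(\<lambda>s. s + 1) ` {1..M}. if t \<notin> C then mu \<kappa> t powi kk M c k (t - 1) else 1) =
     (\<Prod>s\<in>{1..M}. if s + 1 \<notin> C then mu \<kappa> (s + 1) powi kk M c k s else 1)"
    by (subst prod.reindex) (auto simp: inj_on_def intro!: prod.cong)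
  also have "\<dots> = (\<Prod>s\<in>{1..M}. if s + 1 \<notin> C then mu \<kappa> (s + 1) powi k s else 1)"
    by (rule prod.cong) (auto simp: kk_def)
  finally show ?thesis by simp
qed

lemma mon_img:
  "mon M (img M \<kappa> C) k = (\<Prod>s\<in>{1..M}. if s \<in> C then mu \<kappa> s powi k s else 1) *
     (\<Prod>s\<in>{1..M}. if s + 1 \<notin> C then mu \<kappa> (s + 1) powi k s else 1)"
proof -
  have "mon M (img M \<kappa> C) k = (\<Prod>s\<in>{1..M}. (if s \<in> C then mu \<kappa> s powi k s else 1) *
     (if s + 1 \<notin> C then mu \<kappa> (s + 1) powi k s else 1))"
    unfolding mon_def by (rule prod.cong) (auto simp: img_in power_int_mult_distrib)
  thus ?thesis by (simp add: prod.distrib)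
qed

lemma prod_expand:
  assumes M0: "0 \<le> M" and B: "\<And>s. 1 \<le> s \<Longrightarrow> s \<le> M + 1 \<Longrightarrow> Base r (\<kappa> s)"
  shows "(\<Prod>t\<in>{1..M+1}. (mu \<kappa> t powi (kk M c k t + 1) - mu \<kappa> t powi (kk M c k (t-1))) / (mu \<kappa> t - 1)) =
    (\<Sum>C\<in>Pow {1..M+1}. wt M c \<kappa> C * mon M (img M \<kappa> C) k)"
proof -
  let ?I = "{1..M+1}"
  define A where "A t = mu \<kappa> t / (mu \<kappa> t - 1) * mu \<kappa> t powi kk M c k t" for t
  define Bt where "Bt t = (-1) / (mu \<kappa> t - 1) * mu \<kappa> t powi kk M c k (t-1)" for t
  have fac: "(mu \<kappa> t powi (kk M c k t + 1) - mu \<kappa> t powi (kk M c k (t-1))) / (mu \<kappa> t - 1) = A t + Bt t"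
    if "t \<in> ?I" for t
  proof -
    have nz: "mu \<kappa> t \<noteq> 0" using B[of t] that Base_nz unfolding mu_def by auto
    have "mu \<kappa> t powi (kk M c k t + 1) = mu \<kappa> t powi kk M c k t * mu \<kappa> t"
      using nz by (simp add: power_int_add_1)
    thus ?thesis unfolding A_def Bt_def by (simp add: diff_divide_distrib)
  qed
  have "(\<Prod>t\<in>?I. (mu \<kappa> t powi (kk M c k t + 1) - mu \<kappa> t powi (kk M c k (t-1))) / (mu \<kappa> t - 1)) =
    (\<Prod>t\<in>?I. A t + Bt t)" using fac by (rule prod.cong[OF refl])
  also have "\<dots> = (\<Sum>C\<in>Pow ?I. prod A C * prod Bt (?I - C))" by (rule prod_add) simp
  also have "\<dots> = (\<Sum>C\<in>Pow ?I. wt M c \<kappa> C * mon M (img M \<kappa> C) k)"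
  proof (rule sum.cong[OF refl])
    fix C assume C: "C \<in> Pow ?I"
    have "prod A C * prod Bt (?I - C) = (\<Prod>t\<in>?I. if t \<in> C then A t else Bt t)"
    proof -
      have "(\<Prod>t\<in>?I. if t \<in> C then A t else Bt t) = prod A (?I \<inter> {t. t \<in> C}) * prod Bt (?I \<inter> - {t. t \<in> C})"
        by (rule prod.If_cases) simp
      moreover have "?I \<inter> {t. t \<in> C} = C" "?I \<inter> - {t. t \<in> C} = ?I - C" using C by auto
      ultimately show ?thesis by simp
    qed
    also have "\<dots> = (\<Prod>t\<in>?I. fct \<kappa> C t * ((if t \<in> C then mu \<kappa> t powi kk M c k t else 1) *
                        (if t \<notin> C then mu \<kappa> t powi kk M c k (t - 1) else 1)))"
      by (rule prod.cong) (auto simp: A_def Bt_def fct_def)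
    also have "\<dots> = (\<Prod>t\<in>?I. fct \<kappa> C t) * ((\<Prod>t\<in>?I. if t \<in> C then mu \<kappa> t powi kk M c k t else 1) *
                        (\<Prod>t\<in>?I. if t \<notin> C then mu \<kappa> t powi kk M c k (t - 1) else 1))"
      by (simp add: prod.distrib)
    also have "\<dots> = wt M c \<kappa> C * mon M (img M \<kappa> C) k"
      unfolding P1_lemma[OF M0] P2_lemma[OF M0] mon_img wt_def by (simp add: mult_ac)
    finally show "prod A C * prod Bt (?I - C) = wt M c \<kappa> C * mon M (img M \<kappa> C) k" .
  qed
  finally show ?thesis .
qed

lemma ev_step:
  assumes inv: "Inv r (M+1) w" and M0: "0 \<le> M"
  shows "(\<Sum>l\<in>box M c k. sg M c k * qvar powi (\<Sum>t\<in>{1..M+1}. l t) * ev (M+1) w l) = ev M (step M c w) k"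
proof -
  let ?I = "{1..M+1}"
  let ?D = "supp w \<times> Pow ?I"
  let ?G = "\<lambda>x. w (fst x) * wt M c (fst x) (snd x) * mon M (img M (fst x) (snd x)) k"
  have fin: "finite (supp w)" using InvD(1)[OF inv] .
  have finD: "finite ?D" using fin by simp
  have finB: "finite (box M c k)" unfolding box_def by (intro finite_PiE) (auto simp: Ival_def)
  have "(\<Sum>l\<in>box M c k. sg M c k * qvar powi (\<Sum>t\<in>?I. l t) * ev (M+1) w l) =
        (\<Sum>\<kappa>\<in>supp w. w \<kappa> * (\<Sum>l\<in>box M c k. sg M c k * qvar powi (\<Sum>t\<in>?I. l t) * mon (M+1) \<kappa> l))"
    unfolding ev_def by (simp add: sum_distrib_left sum_distrib_right mult_ac) (rule sum.swap)
  also have "\<dots> = (\<Sum>\<kappa>\<in>supp w. w \<kappa> * (\<Sum>C\<in>Pow ?I. wt M c \<kappa> C * mon M (img M \<kappa> C) k))"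
  proof (rule sum.cong[OF refl])
    fix \<kappa> assume "\<kappa> \<in> supp w"
    hence B: "\<And>s. 1 \<le> s \<Longrightarrow> s \<le> M + 1 \<Longrightarrow> Base r (\<kappa> s)" using InvD(3)[OF inv] by (auto simp: supp_def)
    show "w \<kappa> * (\<Sum>l\<in>box M c k. sg M c k * qvar powi (\<Sum>t\<in>?I. l t) * mon (M+1) \<kappa> l) =
          w \<kappa> * (\<Sum>C\<in>Pow ?I. wt M c \<kappa> C * mon M (img M \<kappa> C) k)"
      using box_mon[OF M0 B, where c=c and k=k] prod_expand[OF M0 B, where c=c and k=k] by simp
  qed
  also have "\<dots> = (\<Sum>x\<in>?D. ?G x)"
    by (simp add: sum_distrib_left sum.cartesian_product split_def mult_ac)
  finally have L: "(\<Sum>l\<in>box M c k. sg M c k * qvar powi (\<Sum>t\<in>?I. l t) * ev (M+1) w l) = (\<Sum>x\<in>?D. ?G x)" .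
  let ?T = "(\<lambda>x. img M (fst x) (snd x)) ` ?D"
  have finT: "finite ?T" using finD by simp
  have sub: "supp (step M c w) \<subseteq> ?T"
  proof
    fix \<kappa>' assume "\<kappa>' \<in> supp (step M c w)"
    hence "step M c w \<kappa>' \<noteq> 0" by (simp add: supp_def)
    then obtain x where "x \<in> ?D" "img M (fst x) (snd x) = \<kappa>'" using step_ex by blast
    thus "\<kappa>' \<in> ?T" by force
  qed
  have "ev M (step M c w) k = (\<Sum>\<kappa>'\<in>?T. step M c w \<kappa>' * mon M \<kappa>' k)"
    unfolding ev_def by (rule sum.mono_neutral_left[OF finT sub]) (auto simp: supp_def)
  also have "\<dots> = (\<Sum>\<kappa>'\<in>?T. \<Sum>x\<in>?D. if img M (fst x) (snd x) = \<kappa>' then ?G x else 0)"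
    unfolding step_def by (rule sum.cong[OF refl]) (auto simp: sum_distrib_right intro!: sum.cong)
  also have "\<dots> = (\<Sum>x\<in>?D. \<Sum>\<kappa>'\<in>?T. if img M (fst x) (snd x) = \<kappa>' then ?G x else 0)"
    by (rule sum.swap)
  also have "\<dots> = (\<Sum>x\<in>?D. ?G x)"
  proof (rule sum.cong[OF refl])
    fix x assume "x \<in> ?D"
    hence "img M (fst x) (snd x) \<in> ?T" by blast
    thus "(\<Sum>\<kappa>'\<in>?T. if img M (fst x) (snd x) = \<kappa>' then ?G x else 0) = ?G x"
      using finT by (simp add: sum.delta)
  qed
  finally show ?thesis using L by simp
qed

lemma qpowi_inj: "qvar powi a = qvar powi b \<Longrightarrow> a = b"
  by (metis fls_subdegree_power_int fls_X_subdegree mult.right_neutral fls_X_nonzero)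

lemma poly_zero_on_range:
  fixes P :: "rat fls poly"
  assumes "\<And>j::nat. poly P (qvar powi (2 * int j + e)) = 0"
  shows "P = 0"
proof (rule ccontr)
  assume "P \<noteq> 0"
  hence fin: "finite {x. poly P x = 0}" by (rule poly_roots_finite)
  have "range (\<lambda>j::nat. qvar powi (2 * int j + e)) \<subseteq> {x. poly P x = 0}" using assms by auto
  moreover have "inj (\<lambda>j::nat. qvar powi (2 * int j + e))"
    by (rule injI) (drule qpowi_inj, simp)
  hence "infinite (range (\<lambda>j::nat. qvar powi (2 * int j + e)))"
    using range_inj_infinite by blast
  ultimately show False using fin finite_subset by blast
qed

lemma qpoly_diff: "q_poly f \<Longrightarrow> q_poly g \<Longrightarrow> q_poly (\<lambda>X. f X - g X)"
  unfolding q_poly_def by (metis poly_diff)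

lemma qpoly_unique_zero:
  assumes "q_poly f" "q_poly g" "\<And>X. (-1) powi X * f X + g X = 0"
  shows "f X = 0"
proof -
  obtain P where P: "\<And>X. f X = poly P (qvar powi X)" using assms(1) unfolding q_poly_def by blast
  obtain Q where Q: "\<And>X. g X = poly Q (qvar powi X)" using assms(2) unfolding q_poly_def by blast
  have ev: "(-1::rat fls) powi (2 * int j + 0) = 1" for j :: nat
  proof -
    have "(-1::rat fls) powi (2 * int j + 0) = (-1) powi int (2 * j)" by simp
    also have "\<dots> = 1" by (simp only: power_int_of_nat) simp
    finally show ?thesis .
  qed
  have od: "(-1::rat fls) powi (2 * int j + 1) = -1" for j :: nat
  proof -
    have "(-1::rat fls) powi (2 * int j + 1) = (-1) powi int (2 * j + 1)" by simp
    also have "\<dots> = -1" by (simp only: power_int_of_nat) simp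
    finally show ?thesis .
  qed
  have "P + Q = 0"
    by (rule poly_zero_on_range[where e = 0]) (use assms(3)[of "2 * int _ + 0"] in \<open>simp add: P Q ev\<close>)
  moreover have "Q - P = 0"
    by (rule poly_zero_on_range[where e = 1]) (use assms(3)[of "2 * int _ + 1"] in \<open>simp add: P Q od\<close>)
  ultimately have "P + P = 0" by (metis add_diff_cancel_right' diff_zero eq_iff_diff_eq_0)
  hence "P = 0" by (metis add_cancel_right_right mult_2 mult_eq_0_iff zero_neq_numeral)
  thus ?thesis using P by simp
qed

lemma SP_eq:
  assumes "q_poly p1" "q_poly p2" "\<And>X. f X = (-1) powi X * p1 X + p2 X"
  shows "SP f = p1"
  unfolding SP_def
proof (rule the_equality)
  show "\<exists>p2. q_poly p1 \<and> q_poly p2 \<and> (\<forall>X. f X = (- 1) powi X * p1 X + p2 X)" using assms by blast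
next
  fix p1' assume "\<exists>p2'. q_poly p1' \<and> q_poly p2' \<and> (\<forall>X. f X = (- 1) powi X * p1' X + p2' X)"
  then obtain p2' where h: "q_poly p1'" "q_poly p2'" "\<And>X. f X = (- 1) powi X * p1' X + p2' X" by blast
  have "(\<lambda>X. p1' X - p1 X) X = 0" for X
  proof (rule qpoly_unique_zero[OF qpoly_diff[OF h(1) assms(1)] qpoly_diff[OF h(2) assms(2)]])
    fix X
    show "(-1) powi X * (p1' X - p1 X) + (p2' X - p2 X) = 0"
      using h(3)[of X] assms(3)[of X] by (simp add: algebra_simps)
  qed
  thus "p1' = p1" by auto
qed

lemma qpow_powi: "(qvar ^ e) powi X = (qvar powi X) ^ e"
proof -
  have "(qvar ^ e) powi X = (qvar powi int e) powi X" by simp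
  also have "\<dots> = qvar powi (int e * X)" by (simp add: power_int_mult)
  also have "\<dots> = (qvar powi X) powi int e" by (simp add: power_int_mult mult.commute)
  also have "\<dots> = (qvar powi X) ^ e" by simp
  finally show ?thesis .
qed

lemma lam_powi: "lam r powi X = (-1) powi X * qvar powi (int r * X)"
proof -
  have "lam r = (-1) * qvar ^ r" unfolding lam_def by simp
  hence "lam r powi X = (-1) powi X * (qvar ^ r) powi X" by (simp only: power_int_mult_distrib)
  also have "(qvar ^ r) powi X = qvar powi (int r * X)"
  proof -
    have "(qvar ^ r) powi X = (qvar powi int r) powi X" by (simp only: power_int_of_nat)
    also have "\<dots> = qvar powi (int r * X)" by (simp only: power_int_mult)
    finally show ?thesis .
  qed
  finally show ?thesis .
qed

lemma SP_ev:
  assumes inv: "Inv r M w" and i: "1 \<le> i" "i \<le> M"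
  shows "\<exists>C. \<forall>X. SP (\<lambda>Y. ev M w (k(i := Y))) X / qvar powi (int r * X) = C"
proof -
  let ?S = "supp w"
  let ?S1 = "{\<kappa>\<in>?S. \<kappa> i = lam r}"
  let ?S2 = "{\<kappa>\<in>?S. \<kappa> i \<noteq> lam r}"
  define a where "a \<kappa> = w \<kappa> * (\<Prod>t\<in>{1..M} - {i}. \<kappa> t powi k t)" for \<kappa>
  define ex where "ex b = (SOME e. b = qvar ^ e)" for b
  define C where "C = (\<Sum>\<kappa>\<in>?S1. a \<kappa>)"
  define P where "P = (\<Sum>\<kappa>\<in>?S2. monom (a \<kappa>) (ex (\<kappa> i)))"
  have fin: "finite ?S" using InvD(1)[OF inv] .
  have monsplit: "w \<kappa> * mon M \<kappa> (k(i := X)) = a \<kappa> * \<kappa> i powi X" for \<kappa> X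
  proof -
    have "mon M \<kappa> (k(i := X)) = \<kappa> i powi X * (\<Prod>t\<in>{1..M} - {i}. \<kappa> t powi (k(i := X)) t)"
      unfolding mon_def using i by (subst prod.remove[of _ i]) auto
    also have "(\<Prod>t\<in>{1..M} - {i}. \<kappa> t powi (k(i := X)) t) = (\<Prod>t\<in>{1..M} - {i}. \<kappa> t powi k t)"
      by (rule prod.cong) auto
    finally have "mon M \<kappa> (k(i := X)) = \<kappa> i powi X * (\<Prod>t\<in>{1..M} - {i}. \<kappa> t powi k t)" .
    thus ?thesis unfolding a_def by (simp only: mult_ac)
  qed
  have exe: "\<kappa> i = qvar ^ ex (\<kappa> i)" if "\<kappa> \<in> ?S2" for \<kappa>
  proof -
    have "Base r (\<kappa> i)" using that InvD(3)[OF inv, of \<kappa> i] i by (auto simp: supp_def)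
    hence "\<kappa> i \<in> UB" using that unfolding Base_def by auto
    then obtain e where "\<kappa> i = qvar ^ e" unfolding UB_def by auto
    thus ?thesis unfolding ex_def by (rule someI)
  qed
  let ?p1 = "\<lambda>X. C * qvar powi (int r * X)"
  let ?p2 = "\<lambda>X. poly P (qvar powi X)"
  have decomp: "ev M w (k(i := X)) = (-1) powi X * ?p1 X + ?p2 X" for X
  proof -
    have "ev M w (k(i := X)) = (\<Sum>\<kappa>\<in>?S. a \<kappa> * \<kappa> i powi X)" unfolding ev_def monsplit ..
    also have "\<dots> = (\<Sum>\<kappa>\<in>?S1 \<union> ?S2. a \<kappa> * \<kappa> i powi X)"
      by (rule sum.cong) auto
    also have "\<dots> = (\<Sum>\<kappa>\<in>?S1. a \<kappa> * \<kappa> i powi X) + (\<Sum>\<kappa>\<in>?S2. a \<kappa> * \<kappa> i powi X)"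
      by (rule sum.union_disjoint) (use fin in auto)
    also have "(\<Sum>\<kappa>\<in>?S1. a \<kappa> * \<kappa> i powi X) = (-1) powi X * ?p1 X"
    proof -
      have "(\<Sum>\<kappa>\<in>?S1. a \<kappa> * \<kappa> i powi X) = (\<Sum>\<kappa>\<in>?S1. a \<kappa> * lam r powi X)"
        by (rule sum.cong) auto
      also have "\<dots> = C * lam r powi X" unfolding C_def by (simp only: sum_distrib_right)
      finally show ?thesis unfolding lam_powi by (simp only: mult_ac)
    qed
    also have "(\<Sum>\<kappa>\<in>?S2. a \<kappa> * \<kappa> i powi X) = ?p2 X"
      unfolding P_def poly_sum poly_monom
    proof (rule sum.cong[OF refl])
      fix \<kappa> assume "\<kappa> \<in> ?S2"
      thus "a \<kappa> * \<kappa> i powi X = a \<kappa> * (qvar powi X) ^ ex (\<kappa> i)"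
        using exe[of \<kappa>] qpow_powi by metis
    qed
    finally show ?thesis .
  qed
  have q1: "q_poly ?p1" unfolding q_poly_def
  proof (intro exI allI)
    fix X
    show "C * qvar powi (int r * X) = poly (monom C r) (qvar powi X)"
      by (simp add: poly_monom power_int_mult mult.commute[of "int r"])
  qed
  have q2: "q_poly ?p2" unfolding q_poly_def by blast
  have "SP (\<lambda>Y. ev M w (k(i := Y))) = ?p1" by (rule SP_eq[OF q1 q2 decomp])
  thus ?thesis by auto
qed

definition ilc :: "int \<Rightarrow> int \<Rightarrow> int \<Rightarrow> bool" where
  "ilc x y z \<longleftrightarrow> (x \<le> y \<longrightarrow> x \<le> z \<and> z \<le> y) \<and> (x > y \<longrightarrow> x > z \<and> z > y)"

lemma ilc_Ival: "ilc x y z \<longleftrightarrow> z \<in> Ival x y"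
  unfolding ilc_def Ival_def by auto

lemma is_pattern_iff:
  "is_pattern r n c a \<longleftrightarrow>
     (\<forall>i j. \<not> (1 \<le> i \<and> i \<le> r + 1 \<and> i - 1 \<le> j \<and> j \<le> n + 1) \<longrightarrow> a i j = 0) \<and>
     (\<forall>i. 1 \<le> i \<and> i \<le> r + 1 \<longrightarrow> a i (i - 1) = 0 \<and> a i (n + 1) = c) \<and>
     (\<forall>i j. 2 \<le> i \<and> i \<le> r + 1 \<and> i - 1 \<le> j \<and> j \<le> n \<longrightarrow> ilc (a i j) (a i (j + 1)) (a (i - 1) j))"
  unfolding is_pattern_def pattern_dom_def ilc_def by auto

definition pjoin :: "int \<Rightarrow> int \<Rightarrow> int \<Rightarrow> (int \<Rightarrow> int) \<Rightarrow> (int \<Rightarrow> int \<Rightarrow> int) \<Rightarrow> (int \<Rightarrow> int \<Rightarrow> int)" where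
  "pjoin R n c k a' = (\<lambda>i j. if i = R + 1 then (if R \<le> j \<and> j \<le> n + 1 then kk (n - R) c k (j - R) else 0) else a' i j)"

definition psplit :: "int \<Rightarrow> int \<Rightarrow> (int \<Rightarrow> int \<Rightarrow> int) \<Rightarrow> (int \<Rightarrow> int) \<times> (int \<Rightarrow> int \<Rightarrow> int)" where
  "psplit R n a = (restrict (\<lambda>t. a R (R - 1 + t)) {1..n - R + 1}, (\<lambda>i j. if i \<le> R then a i j else 0))"

lemma patF_iff:
  "a \<in> patterns_F r n c p k \<longleftrightarrow> is_pattern r n c a \<and> (\<forall>t. 1 \<le> t \<and> t \<le> n - r \<longrightarrow> a (r + 1) (r + t) = k t) \<and>
      int (card {j\<in>{1..n}. odd (a 1 j)}) = p"
  unfolding patterns_F_def by auto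

lemma kk0[simp]: "kk M c k 0 = 0" by (simp add: kk_def)
lemma kkM: "0 \<le> M \<Longrightarrow> kk M c k (M + 1) = c" by (simp add: kk_def)
lemma kkt: "1 \<le> t \<Longrightarrow> t \<le> M \<Longrightarrow> kk M c k t = k t" by (simp add: kk_def)

lemma bottom_kk:
  assumes pat: "is_pattern R n c a" and bot: "\<And>t. 1 \<le> t \<Longrightarrow> t \<le> n - R \<Longrightarrow> a (R + 1) (R + t) = k t"
    and R: "0 \<le> R" "R \<le> n" and j: "R \<le> j" "j \<le> n + 1"
  shows "a (R + 1) j = kk (n - R) c k (j - R)"
proof -
  note P = pat[unfolded is_pattern_iff]
  consider "j = R" | "j = n + 1" | "R < j" "j < n + 1" using j by linarith
  thus ?thesis
  proof cases
    case 1
    have "a (R + 1) (R + 1 - 1) = 0" using P[THEN conjunct2, THEN conjunct1, rule_format, of "R+1"] R by auto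
    thus ?thesis using 1 by simp
  next
    case 2
    have "kk (n - R) c k (j - R) = c" using kkM[of "n - R" c k] R 2 by (simp add: algebra_simps)
    thus ?thesis using P R 2 by auto
  next
    case 3
    have "a (R + 1) (R + (j - R)) = k (j - R)" using bot[of "j - R"] 3 by simp
    moreover have "kk (n - R) c k (j - R) = k (j - R)" using 3 by (intro kkt) auto
    ultimately show ?thesis by simp
  qed
qed

lemma split_good:
  assumes R: "1 \<le> R" "R \<le> n" and a: "a \<in> patterns_F R n c p k"
  shows "fst (psplit R n a) \<in> box (n - R) c k"
    and "snd (psplit R n a) \<in> patterns_F (R - 1) n c p (fst (psplit R n a))"
    and "pjoin R n c k (snd (psplit R n a)) = a"
proof -
  have pat: "is_pattern R n c a" and bot: "\<And>t. 1 \<le> t \<Longrightarrow> t \<le> n - R \<Longrightarrow> a (R + 1) (R + t) = k t"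
    and odd: "int (card {j\<in>{1..n}. odd (a 1 j)}) = p" using a unfolding patF_iff by auto
  note P = pat[unfolded is_pattern_iff]
  note bk = bottom_kk[OF pat bot _ R(2)]
  let ?l = "fst (psplit R n a)" and ?a' = "snd (psplit R n a)"
  have l: "?l = restrict (\<lambda>t. a R (R - 1 + t)) {1..n - R + 1}" and a': "?a' = (\<lambda>i j. if i \<le> R then a i j else 0)"
    by (simp_all add: psplit_def)
  show "?l \<in> box (n - R) c k"
    unfolding box_def l restrict_PiE_iff
  proof
    fix t assume t: "t \<in> {1..n - R + 1}"
    have "ilc (a (R + 1) (R - 1 + t)) (a (R + 1) (R - 1 + t + 1)) (a (R + 1 - 1) (R - 1 + t))"
      using P t R by (intro P[THEN conjunct2, THEN conjunct2, rule_format]) auto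
    moreover have "a (R + 1) (R - 1 + t) = kk (n - R) c k (t - 1)" using bk[of "R - 1 + t"] t R by auto
    moreover have "a (R + 1) (R - 1 + t + 1) = kk (n - R) c k t" using bk[of "R - 1 + t + 1"] t R by auto
    ultimately show "a R (R - 1 + t) \<in> Ival (kk (n - R) c k (t - 1)) (kk (n - R) c k t)"
      by (simp add: ilc_Ival)
  qed
  show "?a' \<in> patterns_F (R - 1) n c p ?l"
    unfolding patF_iff
  proof (intro conjI allI impI)
    show "is_pattern (R - 1) n c ?a'" unfolding is_pattern_iff a' using P by auto
    fix t assume t: "1 \<le> t \<and> t \<le> n - (R - 1)"
    thus "?a' (R - 1 + 1) (R - 1 + t) = ?l t" unfolding a' l using R by auto
  next
    show "int (card {j \<in> {1..n}. odd (?a' 1 j)}) = p" unfolding a' using R odd by simp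
  qed
  show "pjoin R n c k ?a' = a"
  proof (intro ext)
    fix i j
    show "pjoin R n c k ?a' i j = a i j"
    proof (cases "i = R + 1")
      case True
      show ?thesis
      proof (cases "R \<le> j \<and> j \<le> n + 1")
        case True thus ?thesis using \<open>i = R + 1\<close> bk[of j] R by (simp add: pjoin_def)
      next
        case False thus ?thesis using \<open>i = R + 1\<close> P R by (auto simp: pjoin_def)
      qed
    next
      case False thus ?thesis using P R by (auto simp: pjoin_def a')
    qed
  qed
qed

lemma join_good:
  assumes R: "1 \<le> R" "R \<le> n" and l: "l \<in> box (n - R) c k" and a': "a' \<in> patterns_F (R - 1) n c p l"
  shows "pjoin R n c k a' \<in> patterns_F R n c p k"
    and "psplit R n (pjoin R n c k a') = (l, a')"
proof -
  have pat: "is_pattern (R - 1) n c a'" and bot: "\<And>t. 1 \<le> t \<Longrightarrow> t \<le> n - (R - 1) \<Longrightarrow> a' (R - 1 + 1) (R - 1 + t) = l t"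
    and odd: "int (card {j\<in>{1..n}. odd (a' 1 j)}) = p" using a' unfolding patF_iff by auto
  have bot': "a' R (R - 1 + t) = l t" if "1 \<le> t" "t \<le> n - R + 1" for t using bot[of t] that by simp
  note P = pat[unfolded is_pattern_iff]
  have lI: "l t \<in> Ival (kk (n - R) c k (t - 1)) (kk (n - R) c k t)" if "1 \<le> t" "t \<le> n - R + 1" for t
    using l that unfolding box_def by (auto simp: PiE_iff)
  have lU: "l t = undefined" if "t \<notin> {1..n - R + 1}" for t
    using l that unfolding box_def by (auto simp: PiE_iff extensional_def)
  let ?a = "pjoin R n c k a'"
  show "?a \<in> patterns_F R n c p k"
    unfolding patF_iff
  proof (intro conjI allI impI)
    show "is_pattern R n c ?a"
      unfolding is_pattern_iff
    proof (intro conjI allI impI)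
      fix i j assume h: "\<not> (1 \<le> i \<and> i \<le> R + 1 \<and> i - 1 \<le> j \<and> j \<le> n + 1)"
      show "?a i j = 0"
      proof (cases "i = R + 1")
        case True thus ?thesis using h R by (auto simp: pjoin_def)
      next
        case False thus ?thesis using h P by (auto simp: pjoin_def)
      qed
    next
      fix i assume h: "1 \<le> i \<and> i \<le> R + 1"
      show "?a i (i - 1) = 0"
      proof (cases "i = R + 1")
        case True thus ?thesis using R by (auto simp: pjoin_def)
      next
        case False thus ?thesis using h P by (auto simp: pjoin_def)
      qed
      show "?a i (n + 1) = c"
      proof (cases "i = R + 1")
        case True
        have "kk (n - R) c k (n + 1 - R) = c" using kkM[of "n - R" c k] R by (simp add: algebra_simps)
        thus ?thesis using True R by (auto simp: pjoin_def)
      next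
        case False thus ?thesis using h P by (auto simp: pjoin_def)
      qed
    next
      fix i j assume h: "2 \<le> i \<and> i \<le> R + 1 \<and> i - 1 \<le> j \<and> j \<le> n"
      show "ilc (?a i j) (?a i (j + 1)) (?a (i - 1) j)"
      proof (cases "i = R + 1")
        case True
        have e1: "?a i j = kk (n - R) c k ((j - R + 1) - 1)" using True h by (simp add: pjoin_def)
        have e2: "?a i (j + 1) = kk (n - R) c k (j - R + 1)" using True h by (simp add: pjoin_def algebra_simps)
        have e3: "?a (i - 1) j = l (j - R + 1)" using True h R bot'[of "j - R + 1"] by (simp add: pjoin_def)
        show ?thesis unfolding e1 e2 e3 ilc_Ival by (rule lI) (use h True in auto)
      next
        case False
        hence "i \<le> R" using h by simp
        thus ?thesis using h P by (auto simp: pjoin_def)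
      qed
    qed
  next
    fix t assume t: "1 \<le> t \<and> t \<le> n - R"
    thus "?a (R + 1) (R + t) = k t" by (auto simp: pjoin_def kk_def)
  next
    show "int (card {j \<in> {1..n}. odd (?a 1 j)}) = p" using R odd by (simp add: pjoin_def)
  qed
  show "psplit R n ?a = (l, a')"
  proof -
    have "restrict (\<lambda>t. ?a R (R - 1 + t)) {1..n - R + 1} = l"
    proof
      fix t show "restrict (\<lambda>t. ?a R (R - 1 + t)) {1..n - R + 1} t = l t"
        using bot' lU[of t] by (auto simp: pjoin_def)
    qed
    moreover have "(\<lambda>i j. if i \<le> R then ?a i j else 0) = a'"
    proof (intro ext)
      fix i j show "(if i \<le> R then ?a i j else 0) = a' i j"
        using P R by (auto simp: pjoin_def)
    qed
    ultimately show ?thesis by (simp add: psplit_def)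
  qed
qed

lemma inversions_fin: "finite (inversions r n a)"
proof -
  have "inversions r n a \<subseteq> {2..r+1} \<times> {0..n}"
    unfolding inversions_def by auto
  thus ?thesis by (rule finite_subset) simp
qed

lemma sgn_join:
  assumes R: "1 \<le> R" "R \<le> n"
  shows "(of_int (pattern_sgn R n (pjoin R n c k a')) :: rat fls) = sg (n - R) c k * of_int (pattern_sgn (R - 1) n a')"
proof -
  let ?M = "n - R"
  let ?a = "pjoin R n c k a'"
  define T2 where "T2 = {j \<in> {R..n}. kk ?M c k (j - R) > kk ?M c k (j + 1 - R)}"
  have inv: "inversions R n ?a = inversions (R - 1) n a' \<union> ({R+1} \<times> T2)"
  proof (rule set_eqI)
    fix x :: "int \<times> int"
    obtain i j where x: "x = (i, j)" by (cases x)
    show "x \<in> inversions R n ?a \<longleftrightarrow> x \<in> inversions (R - 1) n a' \<union> ({R+1} \<times> T2)"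
    proof (cases "i = R + 1")
      case True
      have "?a i j = kk ?M c k (j - R)" "?a i (j + 1) = kk ?M c k (j + 1 - R)" if "R \<le> j" "j \<le> n"
        using True that R by (simp_all add: pjoin_def)
      thus ?thesis using True R unfolding x inversions_def T2_def by auto
    next
      case False
      thus ?thesis unfolding x inversions_def T2_def by (auto simp: pjoin_def)
    qed
  qed
  have disj: "inversions (R - 1) n a' \<inter> ({R+1} \<times> T2) = {}" unfolding inversions_def by auto
  have finT2: "finite T2" unfolding T2_def by (rule finite_subset[of _ "{R..n}"]) auto
  have card_inv: "card (inversions R n ?a) = card (inversions (R - 1) n a') + card T2"
    unfolding inv using card_Un_disjoint[OF inversions_fin _ disj] finT2 by (simp add: card_cartesian_product)
  have T2e: "T2 = (\<lambda>t. t + R - 1) ` {t \<in> {1..?M+1}. kk ?M c k (t - 1) > kk ?M c k t}"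
  proof (rule set_eqI)
    fix j
    show "j \<in> T2 \<longleftrightarrow> j \<in> (\<lambda>t. t + R - 1) ` {t \<in> {1..?M+1}. kk ?M c k (t - 1) > kk ?M c k t}"
    proof
      assume "j \<in> T2"
      hence "j - R + 1 \<in> {t \<in> {1..?M+1}. kk ?M c k (t - 1) > kk ?M c k t}" unfolding T2_def by (auto simp: algebra_simps)
      moreover have "j = (j - R + 1) + R - 1" by simp
      ultimately show "j \<in> (\<lambda>t. t + R - 1) ` {t \<in> {1..?M+1}. kk ?M c k (t - 1) > kk ?M c k t}" by blast
    next
      assume "j \<in> (\<lambda>t. t + R - 1) ` {t \<in> {1..?M+1}. kk ?M c k (t - 1) > kk ?M c k t}"
      then obtain t where t: "t \<in> {1..?M+1}" "kk ?M c k (t - 1) > kk ?M c k t" "j = t + R - 1" by blast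
      hence e: "j - R = t - 1" "j + 1 - R = t" by simp_all
      show "j \<in> T2" unfolding T2_def e using t by auto
    qed
  qed
  have cT2: "card T2 = card {t \<in> {1..?M+1}. kk ?M c k (t - 1) > kk ?M c k t}"
    unfolding T2e by (rule card_image) (auto simp: inj_on_def)
  have sgc: "sg ?M c k = (-1) ^ card {t \<in> {1..?M+1}. kk ?M c k (t - 1) > kk ?M c k t}"
  proof -
    have "sg ?M c k = (\<Prod>t\<in>{1..?M+1}. if kk ?M c k (t - 1) > kk ?M c k t then -1 else 1)"
      unfolding sg_def sgI_def by (rule prod.cong) auto
    also have "\<dots> = (\<Prod>t\<in>{t \<in> {1..?M+1}. kk ?M c k (t - 1) > kk ?M c k t}. -1)"
    proof -
      have e: "{1..?M+1} \<inter> {t. kk ?M c k (t - 1) > kk ?M c k t} = {t \<in> {1..?M+1}. kk ?M c k (t - 1) > kk ?M c k t}" by auto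
      show ?thesis by (subst prod.If_cases) (simp_all only: e finite_atLeastAtMost_int prod.neutral_const mult_1_right)
    qed
    finally show ?thesis by simp
  qed
  show ?thesis unfolding pattern_sgn_def card_inv sgc cT2 by (simp add: power_add mult.commute)
qed

lemma norm_join:
  assumes R: "1 \<le> R" "R \<le> n"
  shows "pattern_norm R n (pjoin R n c k a') = pattern_norm (R - 1) n a' + (\<Sum>t\<in>{1..n - R}. k t)"
proof -
  let ?M = "n - R"
  let ?a = "pjoin R n c k a'"
  have I: "{1..R+1} = insert (R+1) {1..R - 1 + 1}" using R by auto
  have "pattern_norm R n ?a = (\<Sum>j\<in>{R+1..n}. ?a (R+1) j) + (\<Sum>i\<in>{1..R - 1 + 1}. \<Sum>j\<in>{i..n}. ?a i j)"
    unfolding pattern_norm_def I by (subst sum.insert) auto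
  also have "(\<Sum>i\<in>{1..R - 1 + 1}. \<Sum>j\<in>{i..n}. ?a i j) = pattern_norm (R - 1) n a'"
    unfolding pattern_norm_def by (rule sum.cong) (auto simp: pjoin_def)
  also have "(\<Sum>j\<in>{R+1..n}. ?a (R+1) j) = (\<Sum>j\<in>{R+1..n}. k (j - R))"
    by (rule sum.cong) (auto simp: pjoin_def kk_def)
  also have "\<dots> = (\<Sum>t\<in>{1..?M}. k t)"
  proof -
    have "{R+1..n} = (\<lambda>t. t + R) ` {1..?M}" by (auto simp: image_iff)
    moreover have "(\<Sum>j\<in>(\<lambda>t. t + R) ` {1..?M}. k (j - R)) = (\<Sum>t\<in>{1..?M}. k (t + R - R))"
      by (subst sum.reindex) (auto simp: inj_on_def)
    ultimately show ?thesis by (simp add: add.commute)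
  qed
  finally show ?thesis by simp
qed

lemma qpow_cancel: "qvar powi (- s) * qvar powi s = 1"
proof -
  have "qvar powi (- s) * qvar powi s = qvar powi (- s + s)" by (rule power_int_add[symmetric]) simp
  also have "\<dots> = 1" by (simp only: add.left_inverse power_int_0_right)
  finally show ?thesis .
qed

lemma qpow_cancel2: "qvar powi (- s) * (qvar powi s * X) = X"
  by (simp only: mult.assoc[symmetric] qpow_cancel mult_1_left)

lemma qpow_cancel3: "a * qvar powi s * (qvar powi (- s) * X) = a * X"
proof -
  have "qvar powi s * qvar powi (- s) = 1" using qpow_cancel[of s] by (simp only: mult.commute)
  thus ?thesis by (metis mult.assoc mult_1_left)
qed

lemma PF_image:
  assumes R: "1 \<le> R" "R \<le> n"
  shows "patterns_F R n c p k = (\<lambda>x. pjoin R n c k (snd x)) ` Sigma (box (n - R) c k) (\<lambda>l. patterns_F (R - 1) n c p l)"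
proof (rule set_eqI)
  fix a
  show "a \<in> patterns_F R n c p k \<longleftrightarrow> a \<in> (\<lambda>x. pjoin R n c k (snd x)) ` Sigma (box (n - R) c k) (\<lambda>l. patterns_F (R - 1) n c p l)"
  proof
    assume a: "a \<in> patterns_F R n c p k"
    note sg = split_good[OF R a]
    show "a \<in> (\<lambda>x. pjoin R n c k (snd x)) ` Sigma (box (n - R) c k) (\<lambda>l. patterns_F (R - 1) n c p l)"
      using sg by (intro image_eqI[of _ _ "psplit R n a"]) (auto intro: SigmaI[of "fst (psplit R n a)" _ "snd (psplit R n a)", simplified])
  next
    assume "a \<in> (\<lambda>x. pjoin R n c k (snd x)) ` Sigma (box (n - R) c k) (\<lambda>l. patterns_F (R - 1) n c p l)"
    then obtain l a' where "l \<in> box (n - R) c k" "a' \<in> patterns_F (R - 1) n c p l" "a = pjoin R n c k a'" by auto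
    thus "a \<in> patterns_F R n c p k" using join_good[OF R] by auto
  qed
qed

lemma finite_box: "finite (box M c k)"
  unfolding box_def by (intro finite_PiE) (auto simp: Ival_def)

lemma F_rec:
  assumes R: "1 \<le> R" "R \<le> n" and fin: "\<And>l. finite (patterns_F (R - 1) n c p l)"
  shows "F_q R n c p k = (\<Sum>l\<in>box (n - R) c k. sg (n - R) c k * qvar powi (\<Sum>t\<in>{1..n - R + 1}. l t) * F_q (R - 1) n c p l)"
    and "finite (patterns_F R n c p k)"
proof -
  let ?S = "Sigma (box (n - R) c k) (\<lambda>l. patterns_F (R - 1) n c p l)"
  let ?f = "\<lambda>a. (of_int (pattern_sgn R n a) :: rat fls) * qvar powi pattern_norm R n a"
  let ?sk = "\<Sum>t\<in>{1..n - R}. k t"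
  have finS: "finite ?S" using finite_box fin by simp
  show "finite (patterns_F R n c p k)" unfolding PF_image[OF R] using finS by simp
  have "(\<Sum>a\<in>patterns_F R n c p k. ?f a) = (\<Sum>x\<in>?S. ?f (pjoin R n c k (snd x)))"
  proof (rule sum.reindex_bij_witness[where i = "\<lambda>a. psplit R n a" and j = "\<lambda>x. pjoin R n c k (snd x)", symmetric])
    fix x assume "x \<in> ?S"
    thus "psplit R n (pjoin R n c k (snd x)) = x" "pjoin R n c k (snd x) \<in> patterns_F R n c p k"
      using join_good[OF R] by (auto simp: mem_Times_iff)
  next
    fix a assume a: "a \<in> patterns_F R n c p k"
    show "pjoin R n c k (snd (psplit R n a)) = a" "psplit R n a \<in> ?S"
      using split_good[OF R a] by (auto intro: SigmaI[of "fst (psplit R n a)" _ "snd (psplit R n a)", simplified])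
  qed simp
  also have "\<dots> = (\<Sum>l\<in>box (n - R) c k. \<Sum>a'\<in>patterns_F (R - 1) n c p l. ?f (pjoin R n c k a'))"
    by (subst sum.Sigma[OF finite_box]) (use fin in \<open>auto simp: split_def\<close>)
  also have "\<dots> = (\<Sum>l\<in>box (n - R) c k. \<Sum>a'\<in>patterns_F (R - 1) n c p l.
        qvar powi ?sk * (sg (n - R) c k * (of_int (pattern_sgn (R - 1) n a') * qvar powi pattern_norm (R - 1) n a')))"
  proof (intro sum.cong refl)
    fix l a'
    show "?f (pjoin R n c k a') = qvar powi ?sk * (sg (n - R) c k * (of_int (pattern_sgn (R - 1) n a') * qvar powi pattern_norm (R - 1) n a'))"
    proof -
      have e: "qvar powi (pattern_norm (R - 1) n a' + ?sk) = qvar powi (pattern_norm (R - 1) n a') * qvar powi ?sk"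
        by (rule power_int_add) simp
      show ?thesis unfolding sgn_join[OF R] norm_join[OF R] e by (simp only: mult_ac)
    qed
  qed
  finally have E: "(\<Sum>a\<in>patterns_F R n c p k. ?f a) = qvar powi ?sk * (\<Sum>l\<in>box (n - R) c k. sg (n - R) c k *
        (\<Sum>a'\<in>patterns_F (R - 1) n c p l. of_int (pattern_sgn (R - 1) n a') * qvar powi pattern_norm (R - 1) n a'))"
    by (simp add: sum_distrib_left)
  have nR: "n - (R - 1) = n - R + 1" by simp
  show "F_q R n c p k = (\<Sum>l\<in>box (n - R) c k. sg (n - R) c k * qvar powi (\<Sum>t\<in>{1..n - R + 1}. l t) * F_q (R - 1) n c p l)"
    unfolding F_q_def E nR qpow_cancel2 qpow_cancel3 ..
qed

lemma F0:
  assumes n: "0 \<le> n"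
  shows "F_q 0 n c p k = (if int (card {j\<in>{1..n}. odd (k j)}) = p then 1 else 0)"
    and "finite (patterns_F 0 n c p k)"
proof -
  define a0 where "a0 = pjoin 0 n c k (\<lambda>_ _. 0)"
  have a0v: "a0 i j = (if i = 1 \<and> 0 \<le> j \<and> j \<le> n + 1 then kk n c k j else 0)" for i j
    unfolding a0_def pjoin_def by simp
  have PF: "patterns_F 0 n c p k = (if int (card {j\<in>{1..n}. odd (k j)}) = p then {a0} else {})"
  proof (rule set_eqI)
    fix a
    show "a \<in> patterns_F 0 n c p k \<longleftrightarrow> a \<in> (if int (card {j\<in>{1..n}. odd (k j)}) = p then {a0} else {})"
    proof
      assume a: "a \<in> patterns_F 0 n c p k"
      hence pat: "is_pattern 0 n c a" and bot: "\<And>t. 1 \<le> t \<Longrightarrow> t \<le> n \<Longrightarrow> a 1 t = k t"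
        and od: "int (card {j\<in>{1..n}. odd (a 1 j)}) = p" unfolding patF_iff by auto
      note P = pat[unfolded is_pattern_iff]
      have "a = a0"
      proof (intro ext)
        fix i j
        show "a i j = a0 i j"
        proof (cases "i = 1 \<and> 0 \<le> j \<and> j \<le> n + 1")
          case True
          hence "j = 0 \<or> j = n + 1 \<or> (1 \<le> j \<and> j \<le> n)" by auto
          thus ?thesis using True P bot n unfolding a0v by (auto simp: kk_def)
        next
          case False thus ?thesis using P unfolding a0v by auto
        qed
      qed
      moreover have "{j\<in>{1..n}. odd (a 1 j)} = {j\<in>{1..n}. odd (k j)}" using bot by auto
      ultimately show "a \<in> (if int (card {j\<in>{1..n}. odd (k j)}) = p then {a0} else {})" using od by simp
    next
      assume h: "a \<in> (if int (card {j\<in>{1..n}. odd (k j)}) = p then {a0} else {})"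
      hence a: "a = a0" and cd: "int (card {j\<in>{1..n}. odd (k j)}) = p" by (auto split: if_splits)
      have "is_pattern 0 n c a0" unfolding is_pattern_iff a0v using n by (auto simp: kk_def)
      moreover have "{j\<in>{1..n}. odd (a0 1 j)} = {j\<in>{1..n}. odd (k j)}" unfolding a0v by (auto simp: kk_def)
      ultimately show "a \<in> patterns_F 0 n c p k" unfolding patF_iff a using cd by (auto simp: a0v kk_def)
    qed
  qed
  show "finite (patterns_F 0 n c p k)" unfolding PF by simp
  have "inversions 0 n a0 = {}" unfolding inversions_def by auto
  hence sg0: "pattern_sgn 0 n a0 = 1" unfolding pattern_sgn_def by simp
  have nm0: "pattern_norm 0 n a0 = (\<Sum>t\<in>{1..n}. k t)"
    unfolding pattern_norm_def by (simp add: a0v kk_def)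
  show "F_q 0 n c p k = (if int (card {j\<in>{1..n}. odd (k j)}) = p then 1 else 0)"
    unfolding F_q_def PF using qpow_cancel by (simp add: sg0 nm0)
qed

definition kD :: "int set \<Rightarrow> key" where "kD D = (\<lambda>t. if t \<in> D then -1 else 1)"
definition Sp :: "int \<Rightarrow> int \<Rightarrow> int set set" where "Sp n p = {S. S \<subseteq> {1..n} \<and> int (card S) = p}"
definition w0 :: "int \<Rightarrow> int \<Rightarrow> coef" where
  "w0 n p \<kappa> = (if \<kappa> \<in> kD ` Pow {1..n} then (1 / 2 ^ nat n) * (\<Sum>S\<in>Sp n p. (-1) ^ card (S \<inter> {t. \<kappa> t = -1})) else 0)"
definition tau :: "int \<Rightarrow> int \<Rightarrow> int" where
  "tau t s = (if s = t then t + 1 else if s = t + 1 then t else s)"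

lemma m1_ne_1: "(-1 :: rat fls) \<noteq> 1"
proof
  assume "(-1 :: rat fls) = 1"
  hence "fls_nth (-1 :: rat fls) 0 = fls_nth 1 0" by simp
  thus False by simp
qed

lemma kD_inj: "inj kD"
proof (rule injI)
  fix D1 D2 assume h: "kD D1 = kD D2"
  show "D1 = D2"
  proof (rule set_eqI)
    fix x show "x \<in> D1 \<longleftrightarrow> x \<in> D2" using fun_cong[OF h, of x] m1_ne_1 unfolding kD_def
      by (auto split: if_splits)
  qed
qed

lemma kD_m1: "{t. kD D t = -1} = D"
  using m1_ne_1 unfolding kD_def by (auto split: if_splits)

lemma tau_tau[simp]: "tau t (tau t s) = s" unfolding tau_def by auto

lemma tau_image_image[simp]: "tau t ` tau t ` S = S"
  by (force simp: image_iff)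

lemma inj_tau: "inj (tau t)" by (metis injI tau_tau)

lemma swp_kD: "swp t (kD D) = kD (tau t ` D)"
proof
  fix s
  have "s \<in> tau t ` D \<longleftrightarrow> tau t s \<in> D" by (metis image_iff tau_tau)
  thus "swp t (kD D) s = kD (tau t ` D) s" unfolding swp_def kD_def tau_def by auto
qed

lemma tau_sub: "S \<subseteq> {1..n} \<Longrightarrow> 1 \<le> t \<Longrightarrow> t + 1 \<le> n \<Longrightarrow> tau t ` S \<subseteq> {1..n}"
  unfolding tau_def by auto

lemma m1powi: "(-1 :: rat fls) powi m = (if even m then 1 else -1)"
proof (cases "0 \<le> m")
  case True
  hence "(-1 :: rat fls) powi m = (-1) ^ nat m" by (simp add: power_int_def)
  thus ?thesis using True by (simp add: even_nat_iff)
next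
  case False
  hence "(-1 :: rat fls) powi m = (-1) powi (- (- m))" by simp
  also have "\<dots> = (-1) powi (- m)" by (rule power_int_minus_one_minus)
  also have "\<dots> = (-1) ^ nat (- m)" using False by (simp add: power_int_def)
  finally show ?thesis using False by (simp add: even_nat_iff)
qed

lemma supp_w0: "supp (w0 n p) \<subseteq> kD ` Pow {1..n}"
  unfolding supp_def w0_def by auto

lemma ev_w0:
  assumes n: "0 \<le> n"
  shows "ev n (w0 n p) k = (if int (card {j\<in>{1..n}. odd (k j)}) = p then 1 else 0)"
proof -
  let ?I = "{1..n}"
  let ?c0 = "(1 :: rat fls) / 2 ^ nat n"
  let ?Odd = "{j\<in>?I. odd (k j)}"
  let ?x = "\<lambda>S t. (if t \<in> S then -1 else 1) * (-1 :: rat fls) powi k t"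
  have "ev n (w0 n p) k = (\<Sum>\<kappa>\<in>kD ` Pow ?I. w0 n p \<kappa> * mon n \<kappa> k)"
    unfolding ev_def by (rule sum.mono_neutral_left) (use supp_w0 in \<open>auto simp: supp_def\<close>)
  also have "\<dots> = (\<Sum>D\<in>Pow ?I. w0 n p (kD D) * mon n (kD D) k)"
    by (rule sum.reindex[unfolded comp_def]) (meson inj_on_subset kD_inj subset_UNIV)
  also have "\<dots> = (\<Sum>D\<in>Pow ?I. ?c0 * (\<Sum>S\<in>Sp n p. \<Prod>t\<in>D. ?x S t))"
  proof (rule sum.cong[OF refl])
    fix D assume D: "D \<in> Pow ?I"
    have m: "mon n (kD D) k = (\<Prod>t\<in>D. (-1 :: rat fls) powi k t)"
    proof -
      have "mon n (kD D) k = (\<Prod>t\<in>?I. if t \<in> D then (-1 :: rat fls) powi k t else 1)"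
        unfolding mon_def kD_def by (rule prod.cong) auto
      also have "\<dots> = (\<Prod>t\<in>?I \<inter> D. (-1 :: rat fls) powi k t)"
        by (simp add: prod.If_cases Int_def)
      also have "?I \<inter> D = D" using D by auto
      finally show ?thesis .
    qed
    have finD: "finite D" using D by (auto intro: finite_subset)
    have s: "(-1 :: rat fls) ^ card (S \<inter> D) = (\<Prod>t\<in>D. if t \<in> S then -1 else 1)" for S
    proof -
      have "(\<Prod>t\<in>D. if t \<in> S then (-1 :: rat fls) else 1) = (\<Prod>t\<in>D \<inter> S. -1)"
        by (simp add: prod.If_cases[OF finD] Int_def)
      also have "\<dots> = (-1) ^ card (S \<inter> D)" by (simp add: Int_commute)
      finally show ?thesis by simp
    qed
    have "w0 n p (kD D) = ?c0 * (\<Sum>S\<in>Sp n p. \<Prod>t\<in>D. if t \<in> S then -1 else 1)"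
      unfolding w0_def kD_m1 s using D by auto
    thus "w0 n p (kD D) * mon n (kD D) k = ?c0 * (\<Sum>S\<in>Sp n p. \<Prod>t\<in>D. ?x S t)"
      unfolding m by (simp add: sum_distrib_right prod.distrib mult.assoc)
  qed
  also have "\<dots> = ?c0 * (\<Sum>S\<in>Sp n p. \<Sum>D\<in>Pow ?I. \<Prod>t\<in>D. ?x S t)"
    unfolding sum_distrib_left[symmetric] by (rule arg_cong[where f = "\<lambda>z. ?c0 * z"], rule sum.swap)
  also have "\<dots> = ?c0 * (\<Sum>S\<in>Sp n p. \<Prod>t\<in>?I. ?x S t + 1)"
    by (simp add: prod_add)
  also have "\<dots> = ?c0 * (\<Sum>S\<in>Sp n p. if S = ?Odd then 2 ^ nat n else 0)"
  proof (intro arg_cong[where f = "\<lambda>z. ?c0 * z"] sum.cong refl)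
    fix S assume S: "S \<in> Sp n p"
    have f: "?x S t + 1 = (if (t \<in> S \<longleftrightarrow> odd (k t)) then 2 else 0)" for t
      by (auto simp: m1powi)
    have "(\<Prod>t\<in>?I. ?x S t + 1) = (\<Prod>t\<in>?I. if (t \<in> S \<longleftrightarrow> odd (k t)) then 2 else 0)" using f by simp
    also have "\<dots> = (if S = ?Odd then 2 ^ nat n else 0)"
    proof (cases "S = ?Odd")
      case True
      hence "(\<Prod>t\<in>?I. if (t \<in> S \<longleftrightarrow> odd (k t)) then 2 else (0::rat fls)) = (\<Prod>t\<in>?I. 2)"
        by (intro prod.cong) auto
      thus ?thesis using True n by simp
    next
      case False
      have Ssub: "S \<subseteq> ?I" using S unfolding Sp_def by auto
      have "\<exists>t\<in>?I. \<not> (t \<in> S \<longleftrightarrow> odd (k t))"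
      proof (rule ccontr)
        assume "\<not> ?thesis"
        hence "S = ?Odd" using Ssub by blast
        thus False using False by simp
      qed
      then obtain t where "t \<in> ?I" "\<not> (t \<in> S \<longleftrightarrow> odd (k t))" by blast
      hence "(\<Prod>t\<in>?I. if (t \<in> S \<longleftrightarrow> odd (k t)) then 2 else (0::rat fls)) = 0"
        by (intro prod_zero) auto
      thus ?thesis using False by simp
    qed
    finally show "(\<Prod>t\<in>?I. ?x S t + 1) = (if S = ?Odd then 2 ^ nat n else 0)" .
  qed
  also have "\<dots> = (if int (card ?Odd) = p then 1 else 0)"
  proof (cases "int (card ?Odd) = p")
    case True
    hence "?Odd \<in> Sp n p" unfolding Sp_def by auto
    hence "(\<Sum>S\<in>Sp n p. if S = ?Odd then (2::rat fls) ^ nat n else 0) = 2 ^ nat n"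
      by (simp add: sum.delta' Sp_def)
    thus ?thesis using True by simp
  next
    case False
    hence "?Odd \<notin> Sp n p" unfolding Sp_def by auto
    hence "(\<Sum>S\<in>Sp n p. if S = ?Odd then (2::rat fls) ^ nat n else 0) = 0"
      by (intro sum.neutral) auto
    thus ?thesis using False by simp
  qed
  finally show ?thesis .
qed

lemma lam0: "lam 0 = -1" unfolding lam_def by simp

lemma w0_swp:
  assumes t: "1 \<le> t" "t + 1 \<le> n" and D: "D \<subseteq> {1..n}"
  shows "w0 n p (kD (tau t ` D)) = w0 n p (kD D)"
proof -
  have D': "tau t ` D \<subseteq> {1..n}" using tau_sub[OF D t] .
  have m: "kD D \<in> kD ` Pow {1..n}" "kD (tau t ` D) \<in> kD ` Pow {1..n}" using D D' by auto
  have "(\<Sum>S\<in>Sp n p. (-1 :: rat fls) ^ card (S \<inter> tau t ` D)) = (\<Sum>S\<in>Sp n p. (-1) ^ card (S \<inter> D))"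
  proof (rule sum.reindex_bij_witness[where i = "\<lambda>S. tau t ` S" and j = "\<lambda>S. tau t ` S"])
    fix S assume S: "S \<in> Sp n p"
    show "tau t ` tau t ` S = S" by simp
    have "card (tau t ` S) = card S" by (rule card_image) (meson inj_on_subset inj_tau subset_UNIV)
    thus "tau t ` S \<in> Sp n p" using S tau_sub[of S n t] t unfolding Sp_def by auto
    have "tau t ` S \<inter> D = tau t ` S \<inter> tau t ` (tau t ` D)" by simp
    also have "\<dots> = tau t ` (S \<inter> tau t ` D)" by (simp add: image_Int inj_tau)
    finally have e: "tau t ` S \<inter> D = tau t ` (S \<inter> tau t ` D)" .
    have "card (tau t ` (S \<inter> tau t ` D)) = card (S \<inter> tau t ` D)" by (rule card_image) (meson inj_on_subset inj_tau subset_UNIV)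
    thus "(-1 :: rat fls) ^ card (tau t ` S \<inter> D) = (-1) ^ card (S \<inter> tau t ` D)" unfolding e by simp
  next
    fix S assume S: "S \<in> Sp n p"
    show "tau t ` tau t ` S = S" by simp
    have "card (tau t ` S) = card S" by (rule card_image) (meson inj_on_subset inj_tau subset_UNIV)
    thus "tau t ` S \<in> Sp n p" using S tau_sub[of S n t] t unfolding Sp_def by auto
  qed
  thus ?thesis unfolding w0_def kD_m1 using m by simp
qed

lemma Inv_w0:
  assumes n: "0 \<le> n"
  shows "Inv 0 n (w0 n p)"
  unfolding Inv_def
proof (intro conjI ballI allI impI)
  show "finite (supp (w0 n p))" by (rule finite_subset[OF supp_w0]) simp
next
  fix \<kappa> t assume k: "\<kappa> \<in> supp (w0 n p)" "t < 1 \<or> t > n"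
  then obtain D where "D \<subseteq> {1..n}" "\<kappa> = kD D" using supp_w0 by blast
  thus "\<kappa> t = 1" using k(2) unfolding kD_def by auto
next
  fix \<kappa> t assume k: "\<kappa> \<in> supp (w0 n p)" "1 \<le> t \<and> t \<le> n"
  then obtain D where "D \<subseteq> {1..n}" "\<kappa> = kD D" using supp_w0 by blast
  thus "Base 0 (\<kappa> t)" unfolding kD_def Base_def lam0 using one_UB by auto
next
  fix \<kappa> t assume t: "1 \<le> t" "t + 1 \<le> n" and k1: "\<kappa> t = lam 0" and k2: "\<kappa> (t + 1) \<in> UB"
  show "w0 n p \<kappa> * \<kappa> t = - (w0 n p (swp t \<kappa>) * \<kappa> (t + 1))"
  proof (cases "\<kappa> \<in> kD ` Pow {1..n}")
    case True
    then obtain D where D: "D \<subseteq> {1..n}" "\<kappa> = kD D" by blast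
    have "\<kappa> (t+1) \<noteq> -1" using k2 lam_notin_UB[of 0] unfolding lam0 by auto
    hence one: "\<kappa> (t+1) = 1" unfolding D(2) kD_def by (auto split: if_splits)
    have "w0 n p (swp t \<kappa>) = w0 n p \<kappa>" unfolding D(2) swp_kD using w0_swp[OF t D(1)] .
    thus ?thesis using k1 one lam0 by simp
  next
    case False
    have "swp t \<kappa> \<notin> kD ` Pow {1..n}"
    proof
      assume "swp t \<kappa> \<in> kD ` Pow {1..n}"
      then obtain D where D: "D \<subseteq> {1..n}" "swp t \<kappa> = kD D" by blast
      hence "\<kappa> = kD (tau t ` D)" by (metis swp_kD swp_swp)
      moreover have "tau t ` D \<subseteq> {1..n}" using tau_sub[OF D(1) t] .
      ultimately show False using False by blast
    qed
    thus ?thesis using False unfolding w0_def by simp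
  qed
qed

primrec cw :: "int \<Rightarrow> int \<Rightarrow> int \<Rightarrow> nat \<Rightarrow> coef" where
  "cw n c p 0 = w0 n p"
| "cw n c p (Suc r) = step (n - int r - 1) c (cw n c p r)"

lemma main_ind:
  assumes "int r \<le> n"
  shows "Inv r (n - int r) (cw n c p r) \<and> (\<forall>k. F_q (int r) n c p k = ev (n - int r) (cw n c p r) k)
         \<and> (\<forall>k. finite (patterns_F (int r) n c p k))"
  using assms
proof (induction r)
  case 0
  have n: "0 \<le> n" using 0 by simp
  show ?case using Inv_w0[OF n] F0[OF n] ev_w0[OF n] by simp
next
  case (Suc r)
  let ?M = "n - int r - 1"
  have IH: "Inv r (n - int r) (cw n c p r)" "\<And>k. F_q (int r) n c p k = ev (n - int r) (cw n c p r) k"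
    "\<And>k. finite (patterns_F (int r) n c p k)" using Suc by auto
  have M0: "0 \<le> ?M" using Suc.prems by simp
  have e1: "?M + 1 = n - int r" by simp
  have inv: "Inv r (?M + 1) (cw n c p r)" unfolding e1 by (rule IH(1))
  have R: "1 \<le> int (Suc r)" "int (Suc r) \<le> n" using Suc.prems by auto
  have e2: "int (Suc r) - 1 = int r" by simp
  have e3: "n - int (Suc r) = ?M" by simp
  have fin: "\<And>l. finite (patterns_F (int (Suc r) - 1) n c p l)" using IH(3) unfolding e2 .
  note FR = F_rec[OF R fin]
  have "F_q (int (Suc r)) n c p k = ev ?M (cw n c p (Suc r)) k" for k
  proof -
    have "F_q (int (Suc r)) n c p k = (\<Sum>l\<in>box ?M c k. sg ?M c k * qvar powi (\<Sum>t\<in>{1..?M + 1}. l t) * ev (?M + 1) (cw n c p r) l)"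
      unfolding FR(1) e2 e3 IH(2) e1 ..
    also have "\<dots> = ev ?M (cw n c p (Suc r)) k" using ev_step[OF inv M0] by simp
    finally show ?thesis .
  qed
  moreover have "Inv (Suc r) ?M (cw n c p (Suc r))" using step_Inv[OF inv M0] by simp
  ultimately show ?case unfolding e3 using FR(2) by auto
qed

theorem lemma19:
  fixes r n c i p :: int and k :: "int \<Rightarrow> int"
  assumes "r \<ge> 0" and "n \<ge> 1" and "1 \<le> i" and "i < n - r" and "0 \<le> p" and "p \<le> n"
  shows "\<exists>C. \<forall>X. SP (\<lambda>Y. F_q r n c p (k(i := Y))) X / qvar powi (r * X) = C"
proof -
  define r' where "r' = nat r"
  have rr: "int r' = r" using assms(1) unfolding r'_def by simp
  have "int r' \<le> n" using rr assms by simp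
  note MI = main_ind[OF this, of c p]
  have F: "(\<lambda>Y. F_q r n c p (k(i := Y))) = (\<lambda>Y. ev (n - r) (cw n c p r') (k(i := Y)))"
    using MI rr by auto
  have inv: "Inv r' (n - r) (cw n c p r')" using MI rr by simp
  obtain C where "\<forall>X. SP (\<lambda>Y. ev (n - r) (cw n c p r') (k(i := Y))) X / qvar powi (int r' * X) = C"
    using SP_ev[OF inv, of i k] assms by auto
  thus ?thesis unfolding F rr by blast
qed

end
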